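(* Let $q$ be a prime power, let $n$ be a positive even integer, let $\lambda \in \mathbb{F}_{q^n} \setminus \mathbb{F}_{q^2}$, let $t = [\mathbb{F}_{q^2}(\lambda) : \mathbb{F}_{q^2}]$, let $l$ be an integer with $1 \leq l < \frac{t}{2}$, and let $Y = \langle 1, \lambda, \ldots, \lambda^l \rangle_{\mathbb{F}_{q^2}}$. Let $S$ be the $\mathbb{F}_q$-subspace of $Y$ given by \[ S = \langle 1, \lambda, \ldots, \lambda^{l-1} \rangle_{\mathbb{F}_{q^2}} \oplus \lambda^l \mathbb{F}_q \in \mathcal{G}_q(n, 2l + 1), \] and let $\mathcal{C}=\mathrm{Orb}(S)$. Then the weight distribution of $\mathcal{C}$ satisfies \[ \omega_{2i} = \begin{cases} q, & \text{if } i = 1, \\ q^{4r-1}(q^2 - 1), & \text{if } i = 2r + 1,\ r \in \{1, \ldots, l - 1\}, \\ q^{4r-2}(q+1)^2, & \text{if } i = 2r,\ r \in \{1, \ldots, l\}, \\ \frac{q^n-1}{q-1}-(q+1)-(q+1)q^2\frac{(q^{4l-3}-q)(q-1)+(q+1)(q^{4l}-1)}{q^4-1}, & \text{if } i=2l+1. \end{cases} \]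
   Context: $\mathbb{F}_{q^n}$ is viewed as an $n$-dimensional $\mathbb{F}_q$-vector space. $\mathcal{G}_q(n,k)$ denotes the set of all $k$-dimensional $\mathbb{F}_q$-subspaces of $\mathbb{F}_{q^n}$, with subspace distance $d(U,V) = 2k - 2\dim_{\mathbb{F}_q}(U \cap V)$. For an $\mathbb{F}_q$-subspace $S$, $\mathrm{Orb}(S) = \{\alpha S : \alpha \in \mathbb{F}_{q^n}^*\}$ (a one-orbit cyclic subspace code). If $\dim_{\mathbb{F}_q} S = k$, the weight distribution of $\mathcal{C}=\mathrm{Orb}(S)$ is $(\omega_2(\mathcal{C}),\ldots,\omega_{2k}(\mathcal{C}))$ where $\omega_{2i}(\mathcal{C}) = |\{\alpha S \in \mathrm{Orb}(S) : \alpha \in \mathbb{F}_{q^n}^*,\ d(S,\alpha S) = 2i\}|$ (counting distinct subspaces $\alpha S$). *)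

theory Defs
  imports "HOL-Computational_Algebra.Primes" Complex_Main
begin

text \<open>The ambient field F_{q^n} is a finite type 'a of class field; subfields
  (such as F_q, F_{q^2}) are subsets closed under the field operations.\<close>

definition subfield_of :: "'a::field set \<Rightarrow> bool" where
  "subfield_of K \<longleftrightarrow> 0 \<in> K \<and> 1 \<in> K \<and>
     (\<forall>x\<in>K. \<forall>y\<in>K. x + y \<in> K \<and> x * y \<in> K) \<and>
     (\<forall>x\<in>K. - x \<in> K) \<and> (\<forall>x\<in>K. x \<noteq> 0 \<longrightarrow> inverse x \<in> K)"

definition span_over :: "'a::field set \<Rightarrow> 'a set \<Rightarrow> 'a set" where
  "span_over K B = {\<Sum>b\<in>B. c b * b | c. \<forall>b\<in>B. c b \<in> K}"

definition dim_over :: "'a::field set \<Rightarrow> 'a set \<Rightarrow> nat" where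
  "dim_over K W = (LEAST m. \<exists>B. finite B \<and> card B = m \<and> B \<subseteq> W \<and> span_over K B = W)"

definition adjoin :: "'a::field set \<Rightarrow> 'a \<Rightarrow> 'a set" where
  "adjoin K x = \<Inter>{F. subfield_of F \<and> K \<subseteq> F \<and> x \<in> F}"

text \<open>Subspace distance over K, for subspaces U V of dimension k = dim U.\<close>
definition subspace_dist :: "'a::field set \<Rightarrow> 'a set \<Rightarrow> 'a set \<Rightarrow> nat" where
  "subspace_dist K U V = 2 * dim_over K U - 2 * dim_over K (U \<inter> V)"

definition orb :: "'a::field set \<Rightarrow> 'a set set" where
  "orb S = {(\<lambda>x. a * x) ` S | a. a \<noteq> 0}"

definition weight :: "'a::field set \<Rightarrow> 'a set \<Rightarrow> nat \<Rightarrow> nat" where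
  "weight K S i = card {V \<in> orb S. subspace_dist K S V = 2 * i}"

end

theory Submission imports Defs "HOL-Computational_Algebra.Polynomial" "HOL-Library.FuncSet" begin


definition subsp :: "'a::field set \<Rightarrow> 'a set \<Rightarrow> bool" where
  "subsp K W \<longleftrightarrow> 0 \<in> W \<and> (\<forall>x\<in>W. \<forall>y\<in>W. x + y \<in> W) \<and> (\<forall>c\<in>K. \<forall>x\<in>W. c * x \<in> W)"

lemma sf_0: "subfield_of K \<Longrightarrow> 0 \<in> K" unfolding subfield_of_def by auto
lemma sf_1: "subfield_of K \<Longrightarrow> 1 \<in> K" unfolding subfield_of_def by auto
lemma sf_add: "subfield_of K \<Longrightarrow> x \<in> K \<Longrightarrow> y \<in> K \<Longrightarrow> x + y \<in> K" unfolding subfield_of_def by auto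
lemma sf_mult: "subfield_of K \<Longrightarrow> x \<in> K \<Longrightarrow> y \<in> K \<Longrightarrow> x * y \<in> K" unfolding subfield_of_def by auto
lemma sf_uminus: "subfield_of K \<Longrightarrow> x \<in> K \<Longrightarrow> - x \<in> K" unfolding subfield_of_def by auto
lemma sf_inverse: "subfield_of K \<Longrightarrow> x \<in> K \<Longrightarrow> inverse x \<in> K" unfolding subfield_of_def
  by (cases "x = 0") auto

lemma sf_diff: "subfield_of K \<Longrightarrow> x \<in> K \<Longrightarrow> y \<in> K \<Longrightarrow> x - y \<in> K"
  by (metis diff_conv_add_uminus sf_add sf_uminus)

lemma sf_divide: "subfield_of K \<Longrightarrow> x \<in> K \<Longrightarrow> y \<in> K \<Longrightarrow> x / y \<in> K"
  by (simp add: divide_inverse sf_inverse sf_mult)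

lemma sf_sum: "subfield_of K \<Longrightarrow> (\<And>x. x \<in> A \<Longrightarrow> f x \<in> K) \<Longrightarrow> sum f A \<in> K"
  by (induction A rule: infinite_finite_induct) (auto simp: sf_0 sf_add)

lemma sf_power: "subfield_of K \<Longrightarrow> x \<in> K \<Longrightarrow> x ^ n \<in> K"
  by (induction n) (auto simp: sf_1 sf_mult)

lemma subsp_sum: "subsp K W \<Longrightarrow> (\<And>x. x \<in> A \<Longrightarrow> f x \<in> W) \<Longrightarrow> sum f A \<in> W"
  unfolding subsp_def by (induction A rule: infinite_finite_induct) auto

lemma sf_card_ge2: "subfield_of K \<Longrightarrow> finite K \<Longrightarrow> card K \<ge> 2"
proof -
  assume a: "subfield_of K" "finite K"
  have "{0,1} \<subseteq> K" using a sf_0 sf_1 by auto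
  then have "card {0::'a,1} \<le> card K" using a card_mono by blast
  then show ?thesis by simp
qed

lemma span_subsp:
  assumes "subfield_of K" shows "subsp K (span_over K B)"
  unfolding subsp_def span_over_def
proof (intro conjI ballI)
  show "0 \<in> {\<Sum>b\<in>B. c b * b |c. \<forall>b\<in>B. c b \<in> K}"
    by (rule CollectI, rule exI[of _ "\<lambda>_. 0"]) (simp add: sf_0 assms)
next
  fix x y assume "x \<in> {\<Sum>b\<in>B. c b * b |c. \<forall>b\<in>B. c b \<in> K}" "y \<in> {\<Sum>b\<in>B. c b * b |c. \<forall>b\<in>B. c b \<in> K}"
  then obtain c d where "x = (\<Sum>b\<in>B. c b * b)" "\<forall>b\<in>B. c b \<in> K" "y = (\<Sum>b\<in>B. d b * b)" "\<forall>b\<in>B. d b \<in> K" by auto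
  then show "x + y \<in> {\<Sum>b\<in>B. c b * b |c. \<forall>b\<in>B. c b \<in> K}"
    by (intro CollectI exI[of _ "\<lambda>b. c b + d b"]) (auto simp: sum.distrib distrib_right sf_add assms)
next
  fix k x assume "k \<in> K" "x \<in> {\<Sum>b\<in>B. c b * b |c. \<forall>b\<in>B. c b \<in> K}"
  then obtain c where "x = (\<Sum>b\<in>B. c b * b)" "\<forall>b\<in>B. c b \<in> K" by auto
  then show "k * x \<in> {\<Sum>b\<in>B. c b * b |c. \<forall>b\<in>B. c b \<in> K}" using \<open>k \<in> K\<close>
    by (intro CollectI exI[of _ "\<lambda>b. k * c b"]) (auto simp: sum_distrib_left mult.assoc sf_mult assms)
qed

lemma span_sub:
  assumes "subsp K W" "B \<subseteq> W" shows "span_over K B \<subseteq> W"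
proof
  fix x assume "x \<in> span_over K B"
  then obtain c where "x = (\<Sum>b\<in>B. c b * b)" "\<forall>b\<in>B. c b \<in> K" unfolding span_over_def by auto
  then show "x \<in> W" using assms unfolding subsp_def
    by (auto intro!: subsp_sum[OF assms(1)])
qed

lemma span_mem:
  assumes "subfield_of K" "finite B" "b \<in> B" shows "b \<in> span_over K B"
  unfolding span_over_def
proof (intro CollectI exI[of _ "\<lambda>x. if x = b then 1 else 0"] conjI)
  have "(\<Sum>x\<in>B. (if x = b then 1 else 0) * x) = (\<Sum>x\<in>B. (if x = b then x else 0))"
    by (rule sum.cong) auto
  also have "\<dots> = b" using assms by (simp add: sum.delta)
  finally show "b = (\<Sum>x\<in>B. (if x = b then 1 else 0) * x)" by simp
qed (auto simp: assms sf_0 sf_1)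

lemma span_card_le:
  assumes "finite B" "finite K" shows "card (span_over K B) \<le> card K ^ card B"
proof -
  have "span_over K B \<subseteq> (\<lambda>c. \<Sum>b\<in>B. c b * b) ` (PiE B (\<lambda>_. K))"
  proof
    fix x assume "x \<in> span_over K B"
    then obtain c where c: "x = (\<Sum>b\<in>B. c b * b)" "\<forall>b\<in>B. c b \<in> K" unfolding span_over_def by auto
    have "x = (\<Sum>b\<in>B. restrict c B b * b)" using c by simp
    moreover have "restrict c B \<in> PiE B (\<lambda>_. K)" using c by auto
    ultimately show "x \<in> (\<lambda>c. \<Sum>b\<in>B. c b * b) ` (PiE B (\<lambda>_. K))" by blast
  qed
  then have "card (span_over K B) \<le> card ((\<lambda>c. \<Sum>b\<in>B. c b * b) ` (PiE B (\<lambda>_. K)))"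
    by (intro card_mono finite_imageI finite_PiE) (use assms in auto)
  also have "\<dots> \<le> card (PiE B (\<lambda>_. K))" by (rule card_image_le) (intro finite_PiE, use assms in auto)
  also have "\<dots> = card K ^ card B" using assms by (simp add: card_PiE)
  finally show ?thesis .
qed

lemma span_insert:
  assumes "finite B" "w \<notin> B"
  shows "span_over K (insert w B) = {s + c * w | s c. s \<in> span_over K B \<and> c \<in> K}"
proof
  show "span_over K (insert w B) \<subseteq> {s + c * w | s c. s \<in> span_over K B \<and> c \<in> K}"
  proof
    fix x assume "x \<in> span_over K (insert w B)"
    then obtain c where c: "x = (\<Sum>b\<in>insert w B. c b * b)" "\<forall>b\<in>insert w B. c b \<in> K" unfolding span_over_def by auto
    have "x = (\<Sum>b\<in>B. c b * b) + c w * w" using c assms by (simp add: add.commute)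
    moreover have "(\<Sum>b\<in>B. c b * b) \<in> span_over K B" using c unfolding span_over_def by auto
    ultimately show "x \<in> {s + c * w | s c. s \<in> span_over K B \<and> c \<in> K}" using c by auto
  qed
next
  show "{s + c * w | s c. s \<in> span_over K B \<and> c \<in> K} \<subseteq> span_over K (insert w B)"
  proof
    fix x assume "x \<in> {s + c * w | s c. s \<in> span_over K B \<and> c \<in> K}"
    then obtain s a where sa: "x = s + a * w" "s \<in> span_over K B" "a \<in> K" by auto
    then obtain c where c: "s = (\<Sum>b\<in>B. c b * b)" "\<forall>b\<in>B. c b \<in> K" unfolding span_over_def by auto
    have "(\<Sum>b\<in>insert w B. (c(w := a)) b * b) = a * w + (\<Sum>b\<in>B. (c(w := a)) b * b)"
      using assms by simp
    also have "(\<Sum>b\<in>B. (c(w := a)) b * b) = (\<Sum>b\<in>B. c b * b)"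
      by (rule sum.cong) (use assms in auto)
    finally have "x = (\<Sum>b\<in>insert w B. (c(w := a)) b * b)" using sa c by (simp add: add.commute)
    moreover have "\<forall>b\<in>insert w B. (c(w := a)) b \<in> K" using c sa by auto
    ultimately show "x \<in> span_over K (insert w B)" unfolding span_over_def by blast
  qed
qed

lemma subsp_neg: "subfield_of K \<Longrightarrow> subsp K W \<Longrightarrow> x \<in> W \<Longrightarrow> - x \<in> W"
  unfolding subsp_def by (metis mult_minus1 sf_1 sf_uminus)

lemma span_card_insert:
  fixes K :: "'a::{field,finite} set"
  assumes K: "subfield_of K" "finite K" and B: "finite B" and w: "w \<notin> span_over K B"
  shows "card (span_over K (insert w B)) = card K * card (span_over K B)"
proof -
  have wB: "w \<notin> B" using span_mem[OF K(1) B] w by blast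
  have sub: "subsp K (span_over K B)" by (rule span_subsp[OF K(1)])
  have eq: "span_over K (insert w B) = (\<lambda>(s, c). s + c * w) ` (span_over K B \<times> K)"
    unfolding span_insert[OF B wB] by auto
  have inj: "inj_on (\<lambda>(s, c). s + c * w) (span_over K B \<times> K)"
  proof (rule inj_onI, clarsimp)
    fix s c s' c' assume h: "s \<in> span_over K B" "c \<in> K" "s' \<in> span_over K B" "c' \<in> K"
      "s + c * w = s' + c' * w"
    show "s = s' \<and> c = c'"
    proof (cases "c = c'")
      case True then show ?thesis using h by simp
    next
      case False
      have "w = inverse (c - c') * (s' - s)" using h(5) False
        by (simp add: field_simps)
      moreover have "s' - s \<in> span_over K B" using sub h subsp_neg[OF K(1) sub]
        unfolding subsp_def by (metis diff_conv_add_uminus)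
      moreover have "inverse (c - c') \<in> K" using h K by (simp add: sf_diff sf_inverse)
      ultimately have "w \<in> span_over K B" using sub unfolding subsp_def by metis
      then show ?thesis using w by simp
    qed
  qed
  show ?thesis unfolding eq card_image[OF inj] card_cartesian_product by simp
qed

lemma basis_exists:
  fixes K :: "'a::{field,finite} set"
  assumes K: "subfield_of K" and W: "subsp K W"
  shows "\<exists>B. finite B \<and> B \<subseteq> W \<and> span_over K B = W \<and> card W = card K ^ card B"
proof -
  have main: "\<exists>B. finite B \<and> B \<subseteq> W \<and> span_over K B = W \<and> card W = card K ^ card B"
    if "B0 \<subseteq> W" "card (span_over K B0) = card K ^ card B0" for B0
    using that
    proof (induction "card W - card (span_over K B0)" arbitrary: B0 rule: less_induct)
      case (less B)
      have fB: "finite B" by simp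
      have sub: "span_over K B \<subseteq> W" by (rule span_sub[OF W less.prems(1)])
      show ?case
      proof (cases "span_over K B = W")
        case True then show ?thesis using less.prems fB by metis
      next
        case False
        then obtain w where w: "w \<in> W" "w \<notin> span_over K B" using sub by blast
        have wB: "w \<notin> B" using span_mem[OF K fB] w by blast
        have c1: "card (span_over K (insert w B)) = card K * card (span_over K B)"
          by (rule span_card_insert[OF K _ fB w(2)]) simp
        have c2: "card (span_over K (insert w B)) = card K ^ card (insert w B)"
          using c1 less.prems(2) wB by simp
        have sub2: "span_over K (insert w B) \<subseteq> W" by (rule span_sub[OF W]) (use less.prems w in auto)
        have "card (span_over K B) < card (span_over K (insert w B))"
        proof -
          have "span_over K B \<subseteq> span_over K (insert w B)"
            by (rule span_sub[OF span_subsp[OF K]]) (use span_mem[OF K] in auto)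
          moreover have "w \<in> span_over K (insert w B)" by (rule span_mem[OF K]) auto
          ultimately show ?thesis using w(2) by (intro psubset_card_mono) auto
        qed
        moreover have "card (span_over K (insert w B)) \<le> card W" using sub2 by (simp add: card_mono)
        ultimately have "card W - card (span_over K (insert w B)) < card W - card (span_over K B)" by linarith
        then show ?thesis using less.hyps[OF _ _ c2] less.prems w by blast
      qed
    qed
  have "span_over K {} = {0}" unfolding span_over_def by auto
  then show ?thesis using main[of "{}"] by simp
qed

lemma dim_card:
  fixes K :: "'a::{field,finite} set"
  assumes K: "subfield_of K" and W: "subsp K W" and c: "card W = card K ^ m"
  shows "dim_over K W = m"
proof -
  have q2: "card K \<ge> 2" using sf_card_ge2[OF K] by simp
  obtain B0 where B0: "finite B0" "B0 \<subseteq> W" "span_over K B0 = W" "card W = card K ^ card B0"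
    using basis_exists[OF K W] by blast
  have m: "card B0 = m" using B0(4) c q2 by (metis One_nat_def Suc_1 Suc_le_lessD power_inject_exp)
  show ?thesis unfolding dim_over_def
  proof (rule Least_equality)
    show "\<exists>B. finite B \<and> card B = m \<and> B \<subseteq> W \<and> span_over K B = W" using B0 m by blast
  next
    fix y assume "\<exists>B. finite B \<and> card B = y \<and> B \<subseteq> W \<and> span_over K B = W"
    then obtain B where B: "finite B" "card B = y" "span_over K B = W" by blast
    have "card K ^ m \<le> card K ^ y" using span_card_le[of B K] B c by simp
    then show "m \<le> y" using q2 by (metis One_nat_def Suc_1 Suc_le_lessD power_le_imp_le_exp)
  qed
qed

lemma subsp_card:
  fixes K :: "'a::{field,finite} set"
  assumes K: "subfield_of K" and W: "subsp K W"
  shows "card W = card K ^ dim_over K W"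
  using basis_exists[OF K W] dim_card[OF K W] by metis



lemma poly_as_sum: "degree r < m \<Longrightarrow> poly r x = (\<Sum>j<m. coeff r j * x ^ j)" for x :: "'a::field"
proof -
  assume d: "degree r < m"
  have "poly r x = (\<Sum>i\<le>degree r. coeff r i * x ^ i)" by (rule poly_altdef)
  also have "\<dots> = (\<Sum>j<m. coeff r j * x ^ j)"
    by (rule sum.mono_neutral_left) (use d in \<open>auto simp: coeff_eq_0\<close>)
  finally show ?thesis .
qed

lemma adjoin_subsp: "subfield_of L \<Longrightarrow> subsp L (adjoin L x)"
  unfolding subsp_def adjoin_def subfield_of_def by blast

lemma adjoin_sub: "subfield_of Z \<Longrightarrow> L \<subseteq> Z \<Longrightarrow> x \<in> Z \<Longrightarrow> adjoin L x \<subseteq> Z"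
  unfolding adjoin_def by blast

definition inP :: "'a::field set \<Rightarrow> 'a poly \<Rightarrow> bool" where
  "inP L p \<longleftrightarrow> (\<forall>i. coeff p i \<in> L)"

context fixes L :: "'a::field set" assumes L: "subfield_of L"
begin

lemma inP_0[simp]: "inP L 0" unfolding inP_def using sf_0[OF L] by simp
lemma inP_1[simp]: "inP L 1" unfolding inP_def using sf_0[OF L] sf_1[OF L] by (simp add: coeff_1)
lemma inP_add: "inP L p \<Longrightarrow> inP L r \<Longrightarrow> inP L (p + r)" unfolding inP_def using sf_add[OF L] by simp
lemma inP_uminus: "inP L p \<Longrightarrow> inP L (- p)" unfolding inP_def using sf_uminus[OF L] by simp
lemma inP_diff: "inP L p \<Longrightarrow> inP L r \<Longrightarrow> inP L (p - r)" unfolding inP_def using sf_diff[OF L] by simp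
lemma inP_monom: "c \<in> L \<Longrightarrow> inP L (monom c n)" unfolding inP_def using sf_0[OF L] by (simp add: coeff_monom)
lemma inP_const: "c \<in> L \<Longrightarrow> inP L [:c:]" unfolding inP_def using sf_0[OF L] by (simp add: coeff_pCons split: nat.split)
lemma inP_X: "inP L [:0,1:]" unfolding inP_def using sf_0[OF L] sf_1[OF L] by (simp add: coeff_pCons split: nat.split)
lemma inP_mult: "inP L p \<Longrightarrow> inP L r \<Longrightarrow> inP L (p * r)"
  unfolding inP_def coeff_mult by (intro allI sf_sum[OF L] sf_mult[OF L]) auto
lemma inP_smult: "c \<in> L \<Longrightarrow> inP L p \<Longrightarrow> inP L (smult c p)" unfolding inP_def using sf_mult[OF L] by simp
lemma inP_sum: "(\<And>x. x \<in> A \<Longrightarrow> inP L (f x)) \<Longrightarrow> inP L (sum f A)"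
  by (induction A rule: infinite_finite_induct) (auto intro: inP_add)

lemma pdiv:
  assumes "inP L a" "inP L f" "f \<noteq> 0"
  shows "\<exists>h s. inP L h \<and> inP L s \<and> a = h * f + s \<and> (s = 0 \<or> degree s < degree f)"
  using assms(1)
proof (induction "degree a" arbitrary: a rule: less_induct)
  case (less a)
  show ?case
  proof (cases "a = 0 \<or> degree a < degree f")
    case True
    then show ?thesis using less.prems by (intro exI[of _ 0] exI[of _ a]) auto
  next
    case False
    define c where "c = lead_coeff a / lead_coeff f"
    define k where "k = degree a - degree f"
    define a' where "a' = a - monom c k * f"
    have cL: "c \<in> L" unfolding c_def using less.prems assms by (simp add: inP_def sf_divide[OF L])
    have c0: "c \<noteq> 0" unfolding c_def using False assms by simp
    have dm: "degree (monom c k * f) = degree a" using False c0 assms unfolding k_def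
      by (simp add: degree_mult_eq degree_monom_eq)
    have la: "coeff (monom c k * f) (degree a) = lead_coeff a"
    proof -
      have "degree a = k + degree f" using False unfolding k_def by simp
      then have "coeff (monom c k * f) (degree a) = c * lead_coeff f"
        by (simp add: coeff_monom_mult)
      then show ?thesis unfolding c_def using assms by simp
    qed
    have ia': "inP L a'" unfolding a'_def using less.prems assms cL by (intro inP_diff inP_mult inP_monom)
    show ?thesis
    proof (cases "a' = 0")
      case True
      then have "a = monom c k * f + 0" unfolding a'_def by simp
      then show ?thesis using cL by (intro exI[of _ "monom c k"] exI[of _ 0]) (simp add: inP_monom)
    next
      case a'0: False
      have "degree a' \<le> degree a" unfolding a'_def using dm by (metis degree_diff_le order_refl)
      moreover have "coeff a' (degree a) = 0" unfolding a'_def using la by simp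
      ultimately have "degree a' < degree a"
      proof -
        assume h: "degree a' \<le> degree a" "coeff a' (degree a) = 0"
        show ?thesis
        proof (rule ccontr)
          assume "\<not> degree a' < degree a"
          then have "degree a' = degree a" using h by simp
          then have "lead_coeff a' = 0" using h by simp
          then show False using a'0 by simp
        qed
      qed
      then obtain h s where hs: "inP L h" "inP L s" "a' = h * f + s" "s = 0 \<or> degree s < degree f"
        using less.hyps ia' by blast
      have "a = (h + monom c k) * f + s" using hs(3) unfolding a'_def by (simp add: algebra_simps)
      then show ?thesis using hs cL by (intro exI[of _ "h + monom c k"] exI[of _ s]) (auto intro: inP_add inP_monom)
    qed
  qed
qed

end



locale wsetup =
  fixes F L :: "'a::{field,finite} set" and lam :: 'a and q l :: nat
  assumes F: "subfield_of F" and cF: "card F = q" and L: "subfield_of L" and cL: "card L = q^2"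
    and FL: "F \<subseteq> L" and l1: "1 \<le> l" and lt: "2*l < dim_over L (adjoin L lam)"
begin

abbreviation "inL \<equiv> inP L"

lemma ev_nonzero:
  assumes p: "inL p" "p \<noteq> 0" "degree p \<le> 2*l"
  shows "poly p lam \<noteq> 0"
proof
  assume root: "poly p lam = 0"
  define m where "m = degree p"
  define Z where "Z = {poly r lam | r. inL r \<and> degree r < m}"
  have m1: "m \<ge> 1"
  proof (rule ccontr)
    assume "\<not> m \<ge> 1"
    then have "degree p = 0" unfolding m_def by simp
    then have "p = [:coeff p 0:]" by (metis degree_0_id)
    then have "poly p lam = poly [:coeff p 0:] lam" by simp
    then have "poly p lam = coeff p 0" by simp
    moreover have "coeff p 0 \<noteq> 0" using p(2) \<open>degree p = 0\<close> by (metis leading_coeff_0_iff)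
    ultimately show False using root by simp
  qed
  have red: "poly r lam \<in> Z" if rL: "inL r" for r
  proof -
    obtain h s where hs: "inP L h" "inP L s" "r = h * p + s" "s = 0 \<or> degree s < degree p"
      using pdiv[OF L rL p(1,2)] by blast
    have "poly r lam = poly s lam" using hs(3) root by simp
    moreover have "degree s < m" using hs(4) m1 unfolding m_def by auto
    ultimately show ?thesis unfolding Z_def using hs(2) by blast
  qed
  have Zsf: "subfield_of Z"
    unfolding subfield_of_def
  proof (intro conjI ballI impI)
    show "0 \<in> Z" using red[of 0] L by simp
    show "1 \<in> Z" using red[of 1] L by simp
  next
    fix x y assume "x \<in> Z" "y \<in> Z"
    then obtain r s where "x = poly r lam" "inL r" "y = poly s lam" "inL s" unfolding Z_def by blast
    then show "x + y \<in> Z" "x * y \<in> Z"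
      using red[of "r + s"] red[of "r * s"] inP_add[OF L] inP_mult[OF L] by auto
  next
    fix x assume "x \<in> Z"
    then obtain r where "x = poly r lam" "inL r" unfolding Z_def by blast
    then show "- x \<in> Z" using red[of "- r"] inP_uminus[OF L] by auto
  next
    fix x assume x: "x \<in> Z" "x \<noteq> 0"
    have clos: "x * y \<in> Z" if yZ: "y \<in> Z" for y
    proof -
      obtain r s where "x = poly r lam" "inL r" "y = poly s lam" "inL s" using x yZ unfolding Z_def by blast
      then show ?thesis using red[of "r * s"] inP_mult[OF L] by auto
    qed
    have "(\<lambda>y. x * y) ` Z \<subseteq> Z" using clos by auto
    moreover have "card ((\<lambda>y. x * y) ` Z) = card Z" by (rule card_image) (use x in \<open>auto intro: inj_onI\<close>)
    ultimately have "(\<lambda>y. x * y) ` Z = Z" by (simp add: card_subset_eq)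
    moreover have "1 \<in> Z" using red[of 1] L by simp
    ultimately obtain y where "y \<in> Z" "x * y = 1" by (metis imageE)
    then show "inverse x \<in> Z" by (metis inverse_unique)
  qed
  have LZ: "L \<subseteq> Z"
  proof
    fix c assume "c \<in> L"
    then show "c \<in> Z" using red[of "[:c:]"] inP_const[OF L] by auto
  qed
  have lZ: "lam \<in> Z" using red[of "[:0,1:]"] inP_X[OF L] by simp
  have adj: "adjoin L lam \<subseteq> Z" by (rule adjoin_sub[OF Zsf LZ lZ])
  have cZ: "card Z \<le> card L ^ m"
  proof -
    have "Z \<subseteq> (\<lambda>c. \<Sum>j<m. c j * lam ^ j) ` (PiE {..<m} (\<lambda>_. L))"
    proof
      fix z assume "z \<in> Z"
      then obtain r where r: "z = poly r lam" "inL r" "degree r < m" unfolding Z_def by blast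
      have "z = (\<Sum>j<m. restrict (coeff r) {..<m} j * lam ^ j)" using r poly_as_sum by simp
      moreover have "restrict (coeff r) {..<m} \<in> PiE {..<m} (\<lambda>_. L)" using r(2) unfolding inP_def by auto
      ultimately show "z \<in> (\<lambda>c. \<Sum>j<m. c j * lam ^ j) ` (PiE {..<m} (\<lambda>_. L))" by blast
    qed
    then have "card Z \<le> card ((\<lambda>c. \<Sum>j<m. c j * lam ^ j) ` (PiE {..<m} (\<lambda>_. L)))"
      by (intro card_mono) auto
    also have "\<dots> \<le> card (PiE {..<m} (\<lambda>_. L))" by (rule card_image_le) (simp add: finite_PiE)
    also have "\<dots> = card L ^ m" by (simp add: card_PiE)
    finally show ?thesis .
  qed
  have "card (adjoin L lam) = card L ^ dim_over L (adjoin L lam)"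
    by (rule subsp_card[OF L adjoin_subsp[OF L]])
  moreover have "card (adjoin L lam) \<le> card Z" using adj by (simp add: card_mono)
  ultimately have "card L ^ dim_over L (adjoin L lam) \<le> card L ^ m" using cZ by simp
  moreover have "card L \<ge> 2" using sf_card_ge2[OF L] by simp
  ultimately have "dim_over L (adjoin L lam) \<le> m"
    by (metis One_nat_def Suc_1 Suc_le_lessD power_le_imp_le_exp)
  then show False using lt p(3) unfolding m_def by simp
qed

lemma ev_inj:
  assumes "inL p" "inL r" "degree p \<le> 2*l" "degree r \<le> 2*l" "poly p lam = poly r lam"
  shows "p = r"
proof (rule ccontr)
  assume "p \<noteq> r"
  then have "p - r \<noteq> 0" by simp
  moreover have "inL (p - r)" using assms inP_diff[OF L] by simp
  moreover have "degree (p - r) \<le> 2*l" using assms(3,4) degree_diff_le by blast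
  ultimately have "poly (p - r) lam \<noteq> 0" using ev_nonzero by blast
  then show False using assms(5) by simp
qed

end



lemma coeff_mult_top:
  fixes f h :: "'a::comm_semiring_1 poly"
  assumes "degree f \<le> d" "degree h \<le> e"
  shows "coeff (f * h) (d + e) = coeff f d * coeff h e"
proof -
  have "coeff (f * h) (d + e) = (\<Sum>i\<le>d + e. coeff f i * coeff h (d + e - i))" by (rule coeff_mult)
  also have "\<dots> = (\<Sum>i\<le>d + e. if i = d then coeff f d * coeff h e else 0)"
  proof (rule sum.cong)
    fix i assume "i \<in> {..d + e}"
    show "coeff f i * coeff h (d + e - i) = (if i = d then coeff f d * coeff h e else 0)"
    proof (cases "i = d")
      case False
      then have "i > d \<or> d + e - i > e" by auto
      then show ?thesis using assms False by (auto simp: coeff_eq_0)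
    qed simp
  qed simp
  also have "\<dots> = coeff f d * coeff h e" by simp
  finally show ?thesis .
qed

lemma div_step:
  fixes L :: "'a::field set"
  assumes L: "subfield_of L" and P: "inP L f" "inP L g" "inP L a" "inP L b" "f \<noteq> 0"
    and rel: "a * g = f * b"
    and nosmall: "\<And>s t. inP L s \<Longrightarrow> inP L t \<Longrightarrow> s \<noteq> 0 \<Longrightarrow> degree s < degree f \<Longrightarrow> s * g = f * t \<Longrightarrow> False"
  shows "\<exists>h. inP L h \<and> a = f * h \<and> b = g * h"
proof -
  obtain h s where hs: "inP L h" "inP L s" "a = h * f + s" "s = 0 \<or> degree s < degree f"
    using pdiv[OF L P(3) P(1) P(5)] by blast
  have eq: "s * g = f * (b - h * g)"
  proof -
    have "s * g = a * g - h * f * g" using hs(3) by (simp add: algebra_simps)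
    also have "\<dots> = f * (b - h * g)" using rel by (simp add: algebra_simps)
    finally show ?thesis .
  qed
  show ?thesis
  proof (cases "s = 0")
    case True
    then have "f * (b - h * g) = 0" using eq by simp
    then have "b = g * h" using P(5) by (simp add: algebra_simps)
    moreover have "a = f * h" using hs(3) True by (simp add: algebra_simps)
    ultimately show ?thesis using hs(1) by blast
  next
    case False
    then have "degree s < degree f" using hs(4) by simp
    moreover have "inP L (b - h * g)" using P hs by (intro inP_diff[OF L] inP_mult[OF L])
    ultimately show ?thesis using nosmall[OF hs(2) _ False _ eq] by blast
  qed
qed

context wsetup begin

definition sol :: "nat \<Rightarrow> 'a \<Rightarrow> ('a poly \<times> 'a poly) set" where
  "sol k \<alpha> = {(u, v). inL u \<and> inL v \<and> u \<noteq> 0 \<and> v \<noteq> 0 \<and> degree u \<le> k \<and> degree v \<le> k \<and>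
      poly u lam = \<alpha> * poly v lam}"

definition D :: "'a \<Rightarrow> nat" where "D \<alpha> = (LEAST k. sol k \<alpha> \<noteq> {})"
definition mp :: "'a \<Rightarrow> 'a poly \<times> 'a poly" where "mp \<alpha> = (SOME uv. uv \<in> sol (D \<alpha>) \<alpha>)"
definition mf where "mf \<alpha> = fst (mp \<alpha>)"
definition mg where "mg \<alpha> = snd (mp \<alpha>)"

lemma sol_mono: "k \<le> k' \<Longrightarrow> sol k \<alpha> \<subseteq> sol k' \<alpha>"
  unfolding sol_def by auto

lemma D_le: "sol k \<alpha> \<noteq> {} \<Longrightarrow> D \<alpha> \<le> k"
  unfolding D_def by (rule Least_le)

lemma mp_sol: assumes "sol l \<alpha> \<noteq> {}" shows "(mf \<alpha>, mg \<alpha>) \<in> sol (D \<alpha>) \<alpha>"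
proof -
  have "sol (D \<alpha>) \<alpha> \<noteq> {}" unfolding D_def by (rule LeastI[of _ l]) (use assms in simp)
  then have "mp \<alpha> \<in> sol (D \<alpha>) \<alpha>" unfolding mp_def by (metis some_in_eq)
  then show ?thesis unfolding mf_def mg_def by simp
qed

lemma nosmall:
  assumes "inL s" "inL t" "s \<noteq> 0" "t \<noteq> 0" "degree s < D \<alpha>" "degree t < D \<alpha>" "poly s lam = \<alpha> * poly t lam"
  shows False
proof -
  have "(s, t) \<in> sol (D \<alpha> - 1) \<alpha>" unfolding sol_def using assms by auto
  then have "D \<alpha> \<le> D \<alpha> - 1" by (intro D_le) auto
  then show False using assms(5) by simp
qed

context
  fixes \<alpha> assumes a0: "\<alpha> \<noteq> 0" and sl: "sol l \<alpha> \<noteq> {}"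
begin

lemma Dl: "D \<alpha> \<le> l" using D_le[OF sl] .

lemma mfg: "inL (mf \<alpha>)" "inL (mg \<alpha>)" "mf \<alpha> \<noteq> 0" "mg \<alpha> \<noteq> 0" "degree (mf \<alpha>) \<le> D \<alpha>" "degree (mg \<alpha>) \<le> D \<alpha>"
    "poly (mf \<alpha>) lam = \<alpha> * poly (mg \<alpha>) lam"
  using mp_sol[OF sl] unfolding sol_def by auto

lemma mfg_max: "degree (mf \<alpha>) = D \<alpha> \<or> degree (mg \<alpha>) = D \<alpha>"
proof (rule ccontr)
  assume "\<not> ?thesis"
  then have "degree (mf \<alpha>) < D \<alpha>" "degree (mg \<alpha>) < D \<alpha>" using mfg(5,6) by auto
  then show False using nosmall mfg by blast
qed

lemma top_nz: "coeff (mf \<alpha>) (D \<alpha>) \<noteq> 0 \<or> coeff (mg \<alpha>) (D \<alpha>) \<noteq> 0"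
  using mfg_max mfg(3,4) by (metis leading_coeff_0_iff)

lemma poly_mg_nz: "poly (mg \<alpha>) lam \<noteq> 0"
  using ev_nonzero[OF mfg(2) mfg(4)] mfg(6) Dl by simp

lemma rel_poly:
  assumes "inL a" "inL b" "degree a \<le> l" "degree b \<le> l"
  shows "poly a lam = \<alpha> * poly b lam \<longleftrightarrow> a * mg \<alpha> = mf \<alpha> * b"
proof
  assume h: "poly a lam = \<alpha> * poly b lam"
  show "a * mg \<alpha> = mf \<alpha> * b"
  proof (rule ev_inj)
    show "inL (a * mg \<alpha>)" "inL (mf \<alpha> * b)" using assms mfg by (auto intro: inP_mult[OF L])
    show "degree (a * mg \<alpha>) \<le> 2 * l"
      using degree_mult_le[of a "mg \<alpha>"] assms(3) mfg(6) Dl by linarith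
    show "degree (mf \<alpha> * b) \<le> 2 * l"
      using degree_mult_le[of "mf \<alpha>" b] assms(4) mfg(5) Dl by linarith
    show "poly (a * mg \<alpha>) lam = poly (mf \<alpha> * b) lam" using h mfg(7) by simp
  qed
next
  assume h: "a * mg \<alpha> = mf \<alpha> * b"
  have "poly a lam * poly (mg \<alpha>) lam = \<alpha> * poly (mg \<alpha>) lam * poly b lam"
    using arg_cong[OF h, of "\<lambda>p. poly p lam"] mfg(7) by simp
  then show "poly a lam = \<alpha> * poly b lam" using poly_mg_nz by (simp add: field_simps)
qed

lemma struct:
  assumes "inL a" "inL b" "degree a \<le> k" "degree b \<le> k" "k \<le> l" "poly a lam = \<alpha> * poly b lam"
  shows "\<exists>h. inL h \<and> a = mf \<alpha> * h \<and> b = mg \<alpha> * h \<and> degree h \<le> k - D \<alpha>"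
proof -
  have rel: "a * mg \<alpha> = mf \<alpha> * b" using rel_poly assms by auto
  have "\<exists>h. inL h \<and> a = mf \<alpha> * h \<and> b = mg \<alpha> * h"
  proof (cases "degree (mf \<alpha>) = D \<alpha>")
    case True
    show ?thesis
    proof (rule div_step[OF L mfg(1,2) assms(1,2) mfg(3) rel])
      fix s t assume st: "inL s" "inL t" "s \<noteq> 0" "degree s < degree (mf \<alpha>)" "s * mg \<alpha> = mf \<alpha> * t"
      have t0: "t \<noteq> 0" using st(3,5) mfg(4) by auto
      have "degree s + degree (mg \<alpha>) = degree (mf \<alpha>) + degree t"
        using arg_cong[OF st(5), of degree] st(3) t0 mfg(3,4) by (simp add: degree_mult_eq)
      then have dt: "degree t < D \<alpha>" using st(4) True mfg(6) by linarith
      have "poly s lam = \<alpha> * poly t lam" using rel_poly[OF st(1,2)] st(4) dt True mfg(6) Dl st(5) by simp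
      then show False using nosmall[OF st(1,2,3) t0 _ dt] st(4) True by simp
    qed
  next
    case False
    then have True: "degree (mg \<alpha>) = D \<alpha>" using mfg_max by simp
    have rel': "b * mf \<alpha> = mg \<alpha> * a" using rel by (simp add: algebra_simps)
    have "\<exists>h. inL h \<and> b = mg \<alpha> * h \<and> a = mf \<alpha> * h"
    proof (rule div_step[OF L mfg(2,1) assms(2,1) mfg(4) rel'])
      fix s t assume st: "inL s" "inL t" "s \<noteq> 0" "degree s < degree (mg \<alpha>)" "s * mf \<alpha> = mg \<alpha> * t"
      have t0: "t \<noteq> 0" using st(3,5) mfg(3) by auto
      have "degree s + degree (mf \<alpha>) = degree (mg \<alpha>) + degree t"
        using arg_cong[OF st(5), of degree] st(3) t0 mfg(3,4) by (simp add: degree_mult_eq)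
      then have dt: "degree t < D \<alpha>" using st(4) True mfg(5) by linarith
      have "t * mg \<alpha> = mf \<alpha> * s" using st(5) by (simp add: algebra_simps)
      then have "poly t lam = \<alpha> * poly s lam" using rel_poly[OF st(2,1)] st(4) dt True Dl by simp
      then show False using nosmall[OF st(2,1) t0 st(3) dt] st(4) True by simp
    qed
    then show ?thesis by blast
  qed
  then obtain h where h: "inL h" "a = mf \<alpha> * h" "b = mg \<alpha> * h" by blast
  have "degree h \<le> k - D \<alpha>"
  proof (cases "h = 0")
    case False
    have "degree a = degree (mf \<alpha>) + degree h" using h(2) False mfg(3) by (simp add: degree_mult_eq)
    moreover have "degree b = degree (mg \<alpha>) + degree h" using h(3) False mfg(4) by (simp add: degree_mult_eq)
    ultimately show ?thesis using assms(3,4) mfg_max by linarith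
  qed simp
  then show ?thesis using h by blast
qed

end

end



lemma card_polys:
  fixes L :: "'a::{field,finite} set"
  assumes L: "subfield_of L" and C: "C \<subseteq> L"
  shows "card {h. inP L h \<and> degree h \<le> m \<and> coeff h m \<in> C} = card L ^ m * card C"
proof -
  define \<phi> where "\<phi> = (\<lambda>(c :: nat \<Rightarrow> 'a, a). (\<Sum>j<m. monom (c j) j) + monom a m)"
  have co: "coeff (\<phi> (c, a)) i = (if i < m then c i else if i = m then a else 0)" for c a i
    unfolding \<phi>_def by (auto simp: coeff_sum coeff_monom)
  have eq: "{h. inP L h \<and> degree h \<le> m \<and> coeff h m \<in> C} = \<phi> ` (PiE {..<m} (\<lambda>_. L) \<times> C)"
  proof
    show "{h. inP L h \<and> degree h \<le> m \<and> coeff h m \<in> C} \<subseteq> \<phi> ` (PiE {..<m} (\<lambda>_. L) \<times> C)"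
    proof
      fix h assume h: "h \<in> {h. inP L h \<and> degree h \<le> m \<and> coeff h m \<in> C}"
      have "h = \<phi> (restrict (coeff h) {..<m}, coeff h m)"
        by (rule poly_eqI) (use h in \<open>auto simp: co coeff_eq_0\<close>)
      moreover have "(restrict (coeff h) {..<m}, coeff h m) \<in> PiE {..<m} (\<lambda>_. L) \<times> C"
        using h by (auto simp: inP_def)
      ultimately show "h \<in> \<phi> ` (PiE {..<m} (\<lambda>_. L) \<times> C)" by blast
    qed
  next
    show "\<phi> ` (PiE {..<m} (\<lambda>_. L) \<times> C) \<subseteq> {h. inP L h \<and> degree h \<le> m \<and> coeff h m \<in> C}"
    proof clarify
      fix c a assume ca: "c \<in> PiE {..<m} (\<lambda>_. L)" "a \<in> C"
      show "inP L (\<phi> (c, a)) \<and> degree (\<phi> (c, a)) \<le> m \<and> coeff (\<phi> (c, a)) m \<in> C"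
        using ca C sf_0[OF L] by (auto simp: co inP_def intro!: degree_le)
    qed
  qed
  have inj: "inj_on \<phi> (PiE {..<m} (\<lambda>_. L) \<times> C)"
  proof (rule inj_onI, clarify)
    fix c a c' a' assume h: "c \<in> PiE {..<m} (\<lambda>_. L)" "a \<in> C" "c' \<in> PiE {..<m} (\<lambda>_. L)" "a' \<in> C"
      "\<phi> (c, a) = \<phi> (c', a')"
    have "\<And>i. coeff (\<phi> (c, a)) i = coeff (\<phi> (c', a')) i" using h(5) by simp
    then have ci: "\<And>i. i < m \<Longrightarrow> c i = c' i" and "a = a'" by (metis co less_irrefl)+
    moreover have "c = c'"
    proof
      fix i show "c i = c' i" using h(1,3) ci by (cases "i < m") (auto simp: PiE_def extensional_def)
    qed
    ultimately show "c = c' \<and> a = a'" by simp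
  qed
  show ?thesis unfolding eq card_image[OF inj] card_cartesian_product by (simp add: card_PiE)
qed

context wsetup begin

definition PS where "PS = {p. inL p \<and> degree p \<le> l \<and> coeff p l \<in> F}"
definition SS where "SS = (\<lambda>p. poly p lam) ` PS"
definition top where "top \<alpha> = (coeff (mf \<alpha>) (D \<alpha>), coeff (mg \<alpha>) (D \<alpha>))"
definition WF :: "('a \<times> 'a) set" where
  "WF = {(x, y). x \<in> L \<and> y \<in> L \<and> (x, y) \<noteq> (0, 0) \<and> (x = 0 \<or> y = 0 \<or> x / y \<in> F)}"
definition Wall :: "('a \<times> 'a) set" where "Wall = {(x, y). x \<in> L \<and> y \<in> L \<and> (x, y) \<noteq> (0, 0)}"
definition eps where "eps \<alpha> \<longleftrightarrow> top \<alpha> \<in> WF"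
definition mexp where "mexp \<alpha> = (if sol l \<alpha> = {} then 0 else 2 * (l - D \<alpha>) + (if eps \<alpha> then 1 else 0))"

lemmas [simp] = inP_0[OF L] inP_1[OF L]

lemma q2: "q \<ge> 2" using sf_card_ge2[OF F] cF by simp
lemma cL': "card L = q * q" using cL by (simp add: power2_eq_square)

lemma top_Wall: "\<alpha> \<noteq> 0 \<Longrightarrow> sol l \<alpha> \<noteq> {} \<Longrightarrow> top \<alpha> \<in> Wall"
  unfolding Wall_def top_def using top_nz mfg(1,2) by (auto simp: inP_def)

lemma card_C:
  assumes "x \<in> L" "y \<in> L" "(x, y) \<noteq> (0, 0)"
  shows "card {c \<in> L. c * x \<in> F \<and> c * y \<in> F} = (if (x, y) \<in> WF then q else 1)"
proof -
  have scale: "card {c \<in> L. c * z \<in> F} = q" if z: "z \<in> L" "z \<noteq> 0" for z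
  proof -
    have "{c \<in> L. c * z \<in> F} = (\<lambda>w. w / z) ` F"
    proof
      show "{c \<in> L. c * z \<in> F} \<subseteq> (\<lambda>w. w / z) ` F"
      proof
        fix c assume "c \<in> {c \<in> L. c * z \<in> F}"
        then show "c \<in> (\<lambda>w. w / z) ` F" using z by (intro image_eqI[of _ _ "c * z"]) auto
      qed
      show "(\<lambda>w. w / z) ` F \<subseteq> {c \<in> L. c * z \<in> F}"
        using z FL sf_divide[OF L] by auto
    qed
    moreover have "inj_on (\<lambda>w. w / z) F" using z by (auto intro: inj_onI)
    ultimately show ?thesis using cF by (simp add: card_image)
  qed
  show ?thesis
  proof (cases "x = 0")
    case True
    then have "y \<noteq> 0" using assms by simp
    then show ?thesis using True scale[OF assms(2)] sf_0[OF F] assms by (auto simp: WF_def)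
  next
    case x0: False
    show ?thesis
    proof (cases "y = 0")
      case True
      then show ?thesis using x0 scale[OF assms(1)] sf_0[OF F] assms by (auto simp: WF_def mult.commute)
    next
      case y0: False
      show ?thesis
      proof (cases "x / y \<in> F")
        case True
        have "{c \<in> L. c * x \<in> F \<and> c * y \<in> F} = {c \<in> L. c * y \<in> F}"
        proof (intro Collect_cong conj_cong refl iffI)
          fix c assume "c * x \<in> F \<and> c * y \<in> F" then show "c * y \<in> F" by simp
        next
          fix c assume h: "c * y \<in> F"
          have "c * x = (c * y) * (x / y)" using y0 by simp
          then have "c * x \<in> F" using sf_mult[OF F h True] by simp
          then show "c * x \<in> F \<and> c * y \<in> F" using h by simp
        qed
        then show ?thesis using True scale[OF assms(2) y0] assms by (simp add: WF_def)
      next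
        case False
        have "{c \<in> L. c * x \<in> F \<and> c * y \<in> F} = {0}"
        proof -
          have "c = 0" if "c \<in> L" "c * x \<in> F" "c * y \<in> F" for c
          proof (rule ccontr)
            assume "c \<noteq> 0"
            then have "x / y = (c * x) / (c * y)" by simp
            then show False using False sf_divide[OF F] that by metis
          qed
          then show ?thesis using sf_0[OF L] sf_0[OF F] by auto
        qed
        then show ?thesis using False x0 y0 by (simp add: WF_def)
      qed
    qed
  qed
qed

lemma PS_add: "p \<in> PS \<Longrightarrow> r \<in> PS \<Longrightarrow> p + r \<in> PS"
  unfolding PS_def using inP_add[OF L] sf_add[OF F] degree_add_le by auto

lemma PS_smult: "c \<in> F \<Longrightarrow> p \<in> PS \<Longrightarrow> smult c p \<in> PS"
  unfolding PS_def using inP_smult[OF L] sf_mult[OF F] FL by auto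

lemma PS_0: "0 \<in> PS" unfolding PS_def using sf_0[OF F] by simp

lemma SS_subsp: "subsp F SS"
  unfolding subsp_def SS_def
proof (intro conjI ballI)
  show "0 \<in> (\<lambda>p. poly p lam) ` PS" using PS_0 by (metis image_eqI poly_0)
next
  fix x y assume "x \<in> (\<lambda>p. poly p lam) ` PS" "y \<in> (\<lambda>p. poly p lam) ` PS"
  then obtain p r where "p \<in> PS" "r \<in> PS" "x = poly p lam" "y = poly r lam" by blast
  then show "x + y \<in> (\<lambda>p. poly p lam) ` PS" using PS_add by (intro image_eqI[of _ _ "p + r"]) auto
next
  fix c x assume "c \<in> F" "x \<in> (\<lambda>p. poly p lam) ` PS"
  then obtain p where "p \<in> PS" "x = poly p lam" by blast
  then show "c * x \<in> (\<lambda>p. poly p lam) ` PS" using PS_smult \<open>c \<in> F\<close> by (intro image_eqI[of _ _ "smult c p"]) auto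
qed

lemma scaled_subsp: "subsp F W \<Longrightarrow> subsp F ((\<lambda>x. \<alpha> * x) ` W)"
  unfolding subsp_def
proof (intro conjI ballI)
  assume W: "0 \<in> W \<and> (\<forall>x\<in>W. \<forall>y\<in>W. x + y \<in> W) \<and> (\<forall>c\<in>F. \<forall>x\<in>W. c * x \<in> W)"
  show "0 \<in> (\<lambda>x. \<alpha> * x) ` W" using W by (metis image_eqI mult_zero_right)
  fix x y assume "x \<in> (\<lambda>x. \<alpha> * x) ` W" "y \<in> (\<lambda>x. \<alpha> * x) ` W"
  then obtain a b where "a \<in> W" "b \<in> W" "x = \<alpha> * a" "y = \<alpha> * b" by blast
  then show "x + y \<in> (\<lambda>x. \<alpha> * x) ` W" using W by (intro image_eqI[of _ _ "a + b"]) (auto simp: algebra_simps)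
next
  assume W: "0 \<in> W \<and> (\<forall>x\<in>W. \<forall>y\<in>W. x + y \<in> W) \<and> (\<forall>c\<in>F. \<forall>x\<in>W. c * x \<in> W)"
  fix c x assume "c \<in> F" "x \<in> (\<lambda>x. \<alpha> * x) ` W"
  then obtain a where "a \<in> W" "x = \<alpha> * a" by blast
  then show "c * x \<in> (\<lambda>x. \<alpha> * x) ` W" using W \<open>c \<in> F\<close> by (intro image_eqI[of _ _ "c * a"]) (auto simp: algebra_simps)
qed

lemma inter_subsp: "subsp F V \<Longrightarrow> subsp F W \<Longrightarrow> subsp F (V \<inter> W)"
  unfolding subsp_def by auto

lemma PS_deg: "p \<in> PS \<Longrightarrow> degree p \<le> 2 * l" unfolding PS_def by auto

lemma card_SS: "card SS = q ^ (2 * l + 1)"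
proof -
  have inj: "inj_on (\<lambda>p. poly p lam) PS"
    by (rule inj_onI) (rule ev_inj, auto simp: PS_def)
  have "card PS = card L ^ l * card F" unfolding PS_def by (rule card_polys[OF L FL])
  then show ?thesis unfolding SS_def card_image[OF inj] using cL cF by (simp add: power_mult power_add)
qed

lemma inter_zero:
  assumes "sol l \<alpha> = {}"
  shows "SS \<inter> (\<lambda>x. \<alpha> * x) ` SS = {0}"
proof -
  have "x = 0" if xS: "x \<in> SS" "x \<in> (\<lambda>x. \<alpha> * x) ` SS" for x
  proof (rule ccontr)
    assume x0: "x \<noteq> 0"
    obtain a b where ab: "a \<in> PS" "b \<in> PS" "x = poly a lam" "x = \<alpha> * poly b lam"
      using xS unfolding SS_def by blast
    then have "(a, b) \<in> sol l \<alpha>" unfolding sol_def PS_def using x0 by auto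
    then show False using assms by simp
  qed
  moreover have "0 \<in> SS \<inter> (\<lambda>x. \<alpha> * x) ` SS" using SS_subsp scaled_subsp[OF SS_subsp] unfolding subsp_def by blast
  ultimately show ?thesis by blast
qed

end



context wsetup begin

definition Cset where "Cset \<alpha> = {c \<in> L. c * coeff (mf \<alpha>) (D \<alpha>) \<in> F \<and> c * coeff (mg \<alpha>) (D \<alpha>) \<in> F}"
definition H where "H \<alpha> = {h. inL h \<and> degree h \<le> l - D \<alpha> \<and> coeff h (l - D \<alpha>) \<in> Cset \<alpha>}"

context
  fixes \<alpha> assumes a0: "\<alpha> \<noteq> 0" and sl: "sol l \<alpha> \<noteq> {}"
begin

lemma coeff_top_l: "degree h \<le> l - D \<alpha> \<Longrightarrow> coeff (mf \<alpha> * h) l = coeff (mf \<alpha>) (D \<alpha>) * coeff h (l - D \<alpha>)"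
  "degree h \<le> l - D \<alpha> \<Longrightarrow> coeff (mg \<alpha> * h) l = coeff (mg \<alpha>) (D \<alpha>) * coeff h (l - D \<alpha>)"
  using coeff_mult_top[OF mfg(5)[OF a0 sl], of h "l - D \<alpha>"] coeff_mult_top[OF mfg(6)[OF a0 sl], of h "l - D \<alpha>"]
    Dl[OF a0 sl] by auto

lemma inter_eq: "SS \<inter> (\<lambda>x. \<alpha> * x) ` SS = (\<lambda>h. poly (mf \<alpha> * h) lam) ` H \<alpha>"
proof
  show "SS \<inter> (\<lambda>x. \<alpha> * x) ` SS \<subseteq> (\<lambda>h. poly (mf \<alpha> * h) lam) ` H \<alpha>"
  proof
    fix x assume x: "x \<in> SS \<inter> (\<lambda>x. \<alpha> * x) ` SS"
    obtain a b where ab: "a \<in> PS" "b \<in> PS" "x = poly a lam" "x = \<alpha> * poly b lam"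
      using x unfolding SS_def by blast
    obtain h where h: "inL h" "a = mf \<alpha> * h" "b = mg \<alpha> * h" "degree h \<le> l - D \<alpha>"
      using struct[OF a0 sl, of a b l] ab unfolding PS_def by auto
    have "coeff h (l - D \<alpha>) \<in> Cset \<alpha>"
      using ab(1,2) h coeff_top_l[OF h(4)] unfolding PS_def Cset_def
      by (auto simp: mult.commute inP_def)
    then have "h \<in> H \<alpha>" unfolding H_def using h by auto
    then show "x \<in> (\<lambda>h. poly (mf \<alpha> * h) lam) ` H \<alpha>" using ab h by blast
  qed
next
  show "(\<lambda>h. poly (mf \<alpha> * h) lam) ` H \<alpha> \<subseteq> SS \<inter> (\<lambda>x. \<alpha> * x) ` SS"
  proof
    fix x assume "x \<in> (\<lambda>h. poly (mf \<alpha> * h) lam) ` H \<alpha>"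
    then obtain h where h: "h \<in> H \<alpha>" "x = poly (mf \<alpha> * h) lam" by blast
    have hh: "inL h" "degree h \<le> l - D \<alpha>" "coeff h (l - D \<alpha>) \<in> Cset \<alpha>" using h(1) unfolding H_def by auto
    have dl: "D \<alpha> \<le> l" using Dl[OF a0 sl] .
    have "mf \<alpha> * h \<in> PS"
    proof -
      have "degree (mf \<alpha> * h) \<le> l"
        using degree_mult_le[of "mf \<alpha>" h] mfg(5)[OF a0 sl] hh(2) dl by linarith
      then show ?thesis unfolding PS_def using hh coeff_top_l(1)[OF hh(2)] mfg(1)[OF a0 sl]
        by (auto simp: Cset_def mult.commute intro: inP_mult[OF L])
    qed
    moreover have "mg \<alpha> * h \<in> PS"
    proof -
      have "degree (mg \<alpha> * h) \<le> l"
        using degree_mult_le[of "mg \<alpha>" h] mfg(6)[OF a0 sl] hh(2) dl by linarith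
      then show ?thesis unfolding PS_def using hh coeff_top_l(2)[OF hh(2)] mfg(2)[OF a0 sl]
        by (auto simp: Cset_def mult.commute intro: inP_mult[OF L])
    qed
    moreover have "poly (mf \<alpha> * h) lam = \<alpha> * poly (mg \<alpha> * h) lam" using mfg(7)[OF a0 sl] by simp
    ultimately have e1: "x \<in> SS" and e2: "poly (mg \<alpha> * h) lam \<in> SS" and e3: "x = \<alpha> * poly (mg \<alpha> * h) lam"
      unfolding SS_def using h(2) by (blast, blast, simp)
    from e3 e2 have "x \<in> (\<lambda>x. \<alpha> * x) ` SS" by blast
    with e1 show "x \<in> SS \<inter> (\<lambda>x. \<alpha> * x) ` SS" by blast
  qed
qed

lemma card_inter_nz: "card (SS \<inter> (\<lambda>x. \<alpha> * x) ` SS) = q ^ mexp \<alpha>"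
proof -
  have dl: "D \<alpha> \<le> l" using Dl[OF a0 sl] .
  have inj: "inj_on (\<lambda>h. poly (mf \<alpha> * h) lam) (H \<alpha>)"
  proof (rule inj_onI)
    fix h h' assume h: "h \<in> H \<alpha>" "h' \<in> H \<alpha>" "poly (mf \<alpha> * h) lam = poly (mf \<alpha> * h') lam"
    have "degree (mf \<alpha> * h) \<le> 2 * l"
      using degree_mult_le[of "mf \<alpha>" h] mfg(5)[OF a0 sl] h(1) dl unfolding H_def by auto
    moreover have "degree (mf \<alpha> * h') \<le> 2 * l"
      using degree_mult_le[of "mf \<alpha>" h'] mfg(5)[OF a0 sl] h(2) dl unfolding H_def by auto
    moreover have "inL h" "inL h'" using h(1,2) unfolding H_def by auto
    ultimately have "mf \<alpha> * h = mf \<alpha> * h'"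
      using ev_inj[OF inP_mult[OF L mfg(1)[OF a0 sl]] inP_mult[OF L mfg(1)[OF a0 sl]]] h(3) by blast
    then show "h = h'" using mfg(3)[OF a0 sl] by simp
  qed
  have cs: "Cset \<alpha> \<subseteq> L" unfolding Cset_def by auto
  have "card (H \<alpha>) = card L ^ (l - D \<alpha>) * card (Cset \<alpha>)" unfolding H_def by (rule card_polys[OF L cs])
  moreover have "card (Cset \<alpha>) = (if eps \<alpha> then q else 1)"
    unfolding Cset_def eps_def using card_C top_Wall[OF a0 sl] unfolding top_def Wall_def by auto
  ultimately have "card (H \<alpha>) = q ^ (2 * (l - D \<alpha>)) * (if eps \<alpha> then q else 1)"
    using cL by (simp add: power_mult)
  then show ?thesis unfolding inter_eq card_image[OF inj] mexp_def using sl by (auto simp: power_add)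
qed

end

lemma card_inter: "\<alpha> \<noteq> 0 \<Longrightarrow> card (SS \<inter> (\<lambda>x. \<alpha> * x) ` SS) = q ^ mexp \<alpha>"
  using card_inter_nz inter_zero unfolding mexp_def by (cases "sol l \<alpha> = {}") auto

lemma dim_SS: "dim_over F SS = 2 * l + 1"
  by (rule dim_card[OF F SS_subsp]) (simp add: card_SS cF)

lemma dim_inter: "\<alpha> \<noteq> 0 \<Longrightarrow> dim_over F (SS \<inter> (\<lambda>x. \<alpha> * x) ` SS) = mexp \<alpha>"
  by (rule dim_card[OF F inter_subsp[OF SS_subsp scaled_subsp[OF SS_subsp]]]) (simp add: card_inter cF)

lemma mexp_le: "mexp \<alpha> \<le> 2 * l + 1" unfolding mexp_def by auto

lemma dist_eq: "\<alpha> \<noteq> 0 \<Longrightarrow> subspace_dist F SS ((\<lambda>x. \<alpha> * x) ` SS) = 2 * (2 * l + 1) - 2 * mexp \<alpha>"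
  unfolding subspace_dist_def using dim_SS dim_inter by simp

end



lemma solve_rec:
  fixes c :: "nat \<Rightarrow> int" and Q w :: int
  assumes Q: "Q \<ge> 2"
    and rec: "\<And>k. k \<le> l \<Longrightarrow> (\<Sum>d\<le>k. c d * ((Q - 1) * Q ^ (k - d))) = w * (Q - 1) * Q ^ (2 * k) - 2 * (Q - 1) * Q ^ k"
  shows "c 0 = w - 2" "\<And>k. 1 \<le> k \<Longrightarrow> k \<le> l \<Longrightarrow> c k = w * Q ^ (2 * k - 1) * (Q - 1)"
proof -
  have rec': "(\<Sum>d\<le>k. c d * Q ^ (k - d)) = w * Q ^ (2 * k) - 2 * Q ^ k" if "k \<le> l" for k
  proof -
    have "(\<Sum>d\<le>k. c d * Q ^ (k - d)) * (Q - 1) = (\<Sum>d\<le>k. c d * ((Q - 1) * Q ^ (k - d)))"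
      unfolding sum_distrib_right by (rule sum.cong) (simp_all add: mult.commute mult.left_commute)
    also have "\<dots> = (w * Q ^ (2 * k) - 2 * Q ^ k) * (Q - 1)" using rec[OF that] by (simp add: algebra_simps)
    finally show ?thesis using Q by simp
  qed
  show "c 0 = w - 2" using rec'[of 0] by simp
  fix k assume k: "1 \<le> k" "k \<le> l"
  then obtain j where j: "k = Suc j" by (cases k) auto
  have "(\<Sum>d\<le>Suc j. c d * Q ^ (Suc j - d)) = c (Suc j) + Q * (\<Sum>d\<le>j. c d * Q ^ (j - d))"
  proof -
    have "(\<Sum>d\<le>j. c d * Q ^ (Suc j - d)) = Q * (\<Sum>d\<le>j. c d * Q ^ (j - d))"
      by (simp add: sum_distrib_left Suc_diff_le algebra_simps)
    then show ?thesis by simp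
  qed
  then have "c (Suc j) = (w * Q ^ (2 * Suc j) - 2 * Q ^ Suc j) - Q * (w * Q ^ (2 * j) - 2 * Q ^ j)"
    using rec'[of "Suc j"] rec'[of j] k j by simp
  also have "\<dots> = w * Q ^ (2 * Suc j - 1) * (Q - 1)"
    by (simp add: algebra_simps)
  finally show "c k = w * Q ^ (2 * k - 1) * (Q - 1)" using j by simp
qed



context wsetup begin

definition Wok where
  "Wok W \<longleftrightarrow> W \<subseteq> Wall \<and> (\<forall>c\<in>L. c \<noteq> 0 \<longrightarrow> (\<forall>x y. (x, y) \<in> W \<longrightarrow> (c * x, c * y) \<in> W))
     \<and> {w\<in>W. fst w = 0} = {0} \<times> (L - {0}) \<and> {w\<in>W. snd w = 0} = (L - {0}) \<times> {0}"
definition cnt where "cnt W d = card {\<alpha>. \<alpha> \<noteq> 0 \<and> sol l \<alpha> \<noteq> {} \<and> D \<alpha> = d \<and> top \<alpha> \<in> W}"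
definition Bk where "Bk W k = {(u, v). inL u \<and> inL v \<and> u \<noteq> 0 \<and> v \<noteq> 0 \<and> degree u \<le> k \<and> degree v \<le> k
   \<and> (coeff u k, coeff v k) \<in> W}"
definition Fib where "Fib W k \<alpha> = {(u, v) \<in> Bk W k. poly u lam = \<alpha> * poly v lam}"

lemma card_L0: "card (L - {0}) = card L - 1" using sf_0[OF L] by simp

lemma fib_card:
  assumes W: "Wok W" and k: "k \<le> l" and a0: "\<alpha> \<noteq> 0"
  shows "card (Fib W k \<alpha>) = (if sol l \<alpha> \<noteq> {} \<and> D \<alpha> \<le> k \<and> top \<alpha> \<in> W then (card L - 1) * card L ^ (k - D \<alpha>) else 0)"
proof (cases "sol l \<alpha> \<noteq> {} \<and> D \<alpha> \<le> k")
  case False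
  have "Fib W k \<alpha> = {}"
  proof (rule ccontr)
    assume "Fib W k \<alpha> \<noteq> {}"
    then obtain u v where "(u, v) \<in> Fib W k \<alpha>" by auto
    then have uv: "(u, v) \<in> sol k \<alpha>" unfolding Fib_def Bk_def sol_def by auto
    then have "sol l \<alpha> \<noteq> {}" using sol_mono[OF k] by auto
    moreover have "D \<alpha> \<le> k" using D_le uv by auto
    ultimately show False using False by simp
  qed
  then show ?thesis using False by auto
next
  case True
  then have sl: "sol l \<alpha> \<noteq> {}" and dk: "D \<alpha> \<le> k" by auto
  note m = mfg[OF a0 sl]
  define Hk where "Hk = {h. inL h \<and> degree h \<le> k - D \<alpha> \<and> coeff h (k - D \<alpha>) \<in> L - {0}}"
  have Wall: "W \<subseteq> Wall" and sc: "\<And>c x y. c \<in> L \<Longrightarrow> c \<noteq> 0 \<Longrightarrow> (x, y) \<in> W \<Longrightarrow> (c * x, c * y) \<in> W"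
    using W unfolding Wok_def by auto
  have ct: "coeff (mf \<alpha> * h) k = coeff h (k - D \<alpha>) * coeff (mf \<alpha>) (D \<alpha>)"
    "coeff (mg \<alpha> * h) k = coeff h (k - D \<alpha>) * coeff (mg \<alpha>) (D \<alpha>)" if "degree h \<le> k - D \<alpha>" for h
    using coeff_mult_top[OF m(5) that] coeff_mult_top[OF m(6) that] dk by (auto simp: mult.commute)
  have sub: "Fib W k \<alpha> \<subseteq> (\<lambda>h. (mf \<alpha> * h, mg \<alpha> * h)) ` Hk \<and> (Fib W k \<alpha> \<noteq> {} \<longrightarrow> top \<alpha> \<in> W)"
  proof (intro conjI impI subsetI)
    fix uv assume "uv \<in> Fib W k \<alpha>"
    then obtain u v where uv: "uv = (u, v)" "inL u" "inL v" "degree u \<le> k" "degree v \<le> k"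
      "(coeff u k, coeff v k) \<in> W" "poly u lam = \<alpha> * poly v lam"
      unfolding Fib_def Bk_def by auto
    obtain h where h: "inL h" "u = mf \<alpha> * h" "v = mg \<alpha> * h" "degree h \<le> k - D \<alpha>"
      using struct[OF a0 sl uv(2,3,4,5) k uv(7)] by blast
    have "coeff h (k - D \<alpha>) \<noteq> 0" using uv(6) Wall ct[OF h(4)] h unfolding Wall_def by auto
    then show "uv \<in> (\<lambda>h. (mf \<alpha> * h, mg \<alpha> * h)) ` Hk" using h uv unfolding Hk_def by (auto simp: inP_def)
  next
    assume "Fib W k \<alpha> \<noteq> {}"
    then obtain u v where uv: "inL u" "inL v" "degree u \<le> k" "degree v \<le> k"
      "(coeff u k, coeff v k) \<in> W" "poly u lam = \<alpha> * poly v lam"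
      unfolding Fib_def Bk_def by auto
    obtain h where h: "inL h" "u = mf \<alpha> * h" "v = mg \<alpha> * h" "degree h \<le> k - D \<alpha>"
      using struct[OF a0 sl uv(1,2,3,4) k uv(6)] by blast
    define c where "c = coeff h (k - D \<alpha>)"
    have c0: "c \<noteq> 0" using uv(5) Wall ct[OF h(4)] h unfolding Wall_def c_def by auto
    have cL: "inverse c \<in> L" "inverse c \<noteq> 0" using h(1) c0 sf_inverse[OF L] unfolding c_def inP_def by auto
    have "(inverse c * (c * coeff (mf \<alpha>) (D \<alpha>)), inverse c * (c * coeff (mg \<alpha>) (D \<alpha>))) \<in> W"
      using sc[OF cL] uv(5) ct[OF h(4)] h unfolding c_def by simp
    moreover have "inverse c * (c * x) = x" for x using c0 by (simp add: mult.assoc[symmetric])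
    ultimately show "top \<alpha> \<in> W" unfolding top_def by simp
  qed
  have sup: "(\<lambda>h. (mf \<alpha> * h, mg \<alpha> * h)) ` Hk \<subseteq> Fib W k \<alpha>" if tw: "top \<alpha> \<in> W"
  proof
    fix uv assume "uv \<in> (\<lambda>h. (mf \<alpha> * h, mg \<alpha> * h)) ` Hk"
    then obtain h where h: "uv = (mf \<alpha> * h, mg \<alpha> * h)" "inL h" "degree h \<le> k - D \<alpha>"
      "coeff h (k - D \<alpha>) \<in> L" "coeff h (k - D \<alpha>) \<noteq> 0" unfolding Hk_def by auto
    have h0: "h \<noteq> 0" using h(5) by auto
    have "degree (mf \<alpha> * h) \<le> k" using degree_mult_le[of "mf \<alpha>" h] m(5) h(3) dk by linarith
    moreover have "degree (mg \<alpha> * h) \<le> k" using degree_mult_le[of "mg \<alpha>" h] m(6) h(3) dk by linarith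
    moreover have "(coeff (mf \<alpha> * h) k, coeff (mg \<alpha> * h) k) \<in> W"
      using sc[OF h(4,5) tw[unfolded top_def]] ct[OF h(3)] by simp
    moreover have "poly (mf \<alpha> * h) lam = \<alpha> * poly (mg \<alpha> * h) lam" using m(7) by simp
    ultimately show "uv \<in> Fib W k \<alpha>" unfolding Fib_def Bk_def using h h0 m
      by (auto intro: inP_mult[OF L])
  qed
  have inj: "inj_on (\<lambda>h. (mf \<alpha> * h, mg \<alpha> * h)) Hk"
    by (rule inj_onI) (use m(3) in simp)
  have cH: "card Hk = card L ^ (k - D \<alpha>) * (card L - 1)"
    unfolding Hk_def by (subst card_polys[OF L]) (auto simp: card_L0)
  show ?thesis
  proof (cases "top \<alpha> \<in> W")
    case True
    then have "Fib W k \<alpha> = (\<lambda>h. (mf \<alpha> * h, mg \<alpha> * h)) ` Hk" using sub sup by blast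
    then show ?thesis using True sl dk cH card_image[OF inj] by simp
  next
    case False
    then have "Fib W k \<alpha> = {}" using sub by blast
    then show ?thesis using False by simp
  qed
qed

end



lemma finite_polys: "finite {h :: 'a::{field,finite} poly. degree h \<le> m}"
proof -
  have inj: "inj_on (\<lambda>h. restrict (coeff h) {..m}) {h :: 'a poly. degree h \<le> m}"
  proof (rule inj_onI, rule poly_eqI)
    fix h h' :: "'a poly" and n assume h: "h \<in> {h. degree h \<le> m}" "h' \<in> {h. degree h \<le> m}"
      "restrict (coeff h) {..m} = restrict (coeff h') {..m}"
    show "coeff h n = coeff h' n"
    proof (cases "n \<le> m")
      case True then show ?thesis using fun_cong[OF h(3), of n] by simp
    next
      case False then show ?thesis using h(1,2) by (simp add: coeff_eq_0)
    qed
  qed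
  have sub: "(\<lambda>h. restrict (coeff h) {..m}) ` {h :: 'a poly. degree h \<le> m} \<subseteq> PiE {..m} (\<lambda>_. UNIV)"
    by (rule image_subsetI) (simp only: restrict_PiE_iff, simp)
  show ?thesis by (rule inj_on_finite[OF inj sub]) (simp add: finite_PiE)
qed

lemma finite_polys': "finite {h :: 'a::{field,finite} poly. degree h \<le> m \<and> P h}"
  by (rule finite_subset[OF _ finite_polys[of m]]) auto

context wsetup begin

lemma Bk_sum: "k \<le> l \<Longrightarrow> card (Bk W k) = (\<Sum>\<alpha>\<in>UNIV - {0}. card (Fib W k \<alpha>))"
proof -
  assume k: "k \<le> l"
  have "Bk W k = (\<Union>\<alpha>\<in>UNIV - {0}. Fib W k \<alpha>)"
  proof
    show "Bk W k \<subseteq> (\<Union>\<alpha>\<in>UNIV - {0}. Fib W k \<alpha>)"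
    proof
      fix uv assume uv: "uv \<in> Bk W k"
      then obtain u v where b: "uv = (u, v)" "inL u" "inL v" "u \<noteq> 0" "v \<noteq> 0" "degree u \<le> k" "degree v \<le> k"
        unfolding Bk_def by auto
      have pu: "poly u lam \<noteq> 0" by (rule ev_nonzero) (use b k in auto)
      have pv: "poly v lam \<noteq> 0" by (rule ev_nonzero) (use b k in auto)
      have "uv \<in> Fib W k (poly u lam / poly v lam)" unfolding Fib_def using uv b pv by simp
      moreover have "poly u lam / poly v lam \<noteq> 0" using pu pv by simp
      ultimately show "uv \<in> (\<Union>\<alpha>\<in>UNIV - {0}. Fib W k \<alpha>)" by blast
    qed
  qed (auto simp: Fib_def)
  moreover have "card (\<Union>\<alpha>\<in>UNIV - {0}. Fib W k \<alpha>) = (\<Sum>\<alpha>\<in>UNIV - {0}. card (Fib W k \<alpha>))"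
  proof (rule card_UN_disjoint)
    show "\<forall>i\<in>UNIV - {0}. \<forall>j\<in>UNIV - {0}. i \<noteq> j \<longrightarrow> Fib W k i \<inter> Fib W k j = {}"
    proof (intro ballI impI)
      fix i j :: 'a assume "i \<noteq> j"
      show "Fib W k i \<inter> Fib W k j = {}"
      proof (rule ccontr)
        assume "Fib W k i \<inter> Fib W k j \<noteq> {}"
        then obtain u v where "(u, v) \<in> Fib W k i" "(u, v) \<in> Fib W k j" by auto
        then have b: "(u, v) \<in> Bk W k" "poly u lam = i * poly v lam" "poly u lam = j * poly v lam"
          unfolding Fib_def by auto
        have "poly v lam \<noteq> 0" by (rule ev_nonzero) (use b k in \<open>auto simp: Bk_def\<close>)
        then show False using b \<open>i \<noteq> j\<close> by simp
      qed
    qed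
  next
    show "\<forall>i\<in>UNIV - {0}. finite (Fib W k i)"
    proof
      fix i
      have "Fib W k i \<subseteq> {h. degree h \<le> k} \<times> {h. degree h \<le> k}" unfolding Fib_def Bk_def by auto
      then show "finite (Fib W k i)" using finite_polys by (metis finite_SigmaI finite_subset)
    qed
  qed simp
  ultimately show ?thesis by simp
qed

lemma regroup:
  assumes "Wok W" "k \<le> l"
  shows "(\<Sum>\<alpha>\<in>UNIV - {0}. card (Fib W k \<alpha>)) = (\<Sum>d\<le>k. cnt W d * ((card L - 1) * card L ^ (k - d)))"
proof -
  define A where "A = {\<alpha> \<in> UNIV - {0}. sol l \<alpha> \<noteq> {} \<and> D \<alpha> \<le> k \<and> top \<alpha> \<in> W}"
  have "(\<Sum>\<alpha>\<in>UNIV - {0}. card (Fib W k \<alpha>)) =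
        (\<Sum>\<alpha>\<in>UNIV - {0}. if sol l \<alpha> \<noteq> {} \<and> D \<alpha> \<le> k \<and> top \<alpha> \<in> W then (card L - 1) * card L ^ (k - D \<alpha>) else 0)"
    by (rule sum.cong) (use fib_card[OF assms] in auto)
  also have "\<dots> = (\<Sum>\<alpha>\<in>A. (card L - 1) * card L ^ (k - D \<alpha>))"
    unfolding A_def by (subst sum.inter_filter) auto
  also have "\<dots> = (\<Sum>d\<le>k. \<Sum>\<alpha>\<in>{x. x \<in> A \<and> D x = d}. (card L - 1) * card L ^ (k - D \<alpha>))"
    by (rule sum.group[symmetric]) (auto simp: A_def)
  also have "\<dots> = (\<Sum>d\<le>k. cnt W d * ((card L - 1) * card L ^ (k - d)))"
  proof (rule sum.cong)
    fix d assume d: "d \<in> {..k}"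
    have "{x. x \<in> A \<and> D x = d} = {\<alpha>. \<alpha> \<noteq> 0 \<and> sol l \<alpha> \<noteq> {} \<and> D \<alpha> = d \<and> top \<alpha> \<in> W}"
      unfolding A_def using d by auto
    then show "(\<Sum>\<alpha>\<in>{x. x \<in> A \<and> D x = d}. (card L - 1) * card L ^ (k - D \<alpha>)) = cnt W d * ((card L - 1) * card L ^ (k - d))"
      unfolding cnt_def by simp
  qed simp
  finally show ?thesis .
qed

lemma Bk_direct:
  assumes W: "Wok W"
  shows "int (card (Bk W k)) = int (card W) * int (card L) ^ (2 * k) - 2 * (int (card L) - 1) * int (card L) ^ k"
proof -
  define U where "U c = {u. inL u \<and> degree u \<le> k \<and> coeff u k = c \<and> u \<noteq> 0}" for c
  have cU: "card (U c) = card L ^ k - (if c = 0 then 1 else 0)" if c: "c \<in> L" for c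
  proof -
    have "card {u. inL u \<and> degree u \<le> k \<and> coeff u k \<in> {c}} = card L ^ k"
      using card_polys[OF L, of "{c}" k] c by simp
    moreover have "U c = {u. inL u \<and> degree u \<le> k \<and> coeff u k \<in> {c}} - (if c = 0 then {0} else {})"
      unfolding U_def by auto
    ultimately show ?thesis by (auto simp: card_Diff_singleton)
  qed
  have finU: "finite (U c)" for c unfolding U_def by (rule finite_subset[OF _ finite_polys[of k]]) auto
  have WL: "W \<subseteq> Wall" using W unfolding Wok_def by auto
  have "Bk W k = (\<Union>w\<in>W. U (fst w) \<times> U (snd w))"
    unfolding Bk_def U_def by auto
  then have "card (Bk W k) = (\<Sum>w\<in>W. card (U (fst w) \<times> U (snd w)))"
    by (simp, subst card_UN_disjoint) (use finU in \<open>auto simp: U_def\<close>)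
  also have "\<dots> = (\<Sum>w\<in>W. card (U (fst w)) * card (U (snd w)))" by (simp add: card_cartesian_product)
  finally have "int (card (Bk W k)) = (\<Sum>w\<in>W. int (card (U (fst w))) * int (card (U (snd w))))" by simp
  also have "\<dots> = (\<Sum>w\<in>W. int (card L) ^ (2 * k) - int (card L) ^ k * (if fst w = 0 then 1 else 0)
                     - int (card L) ^ k * (if snd w = 0 then 1 else 0))"
  proof (rule sum.cong)
    fix w assume w: "w \<in> W"
    then have wl: "fst w \<in> L" "snd w \<in> L" "w \<noteq> (0, 0)" using WL unfolding Wall_def by auto
    have pos: "card L ^ k \<ge> 1" using sf_card_ge2[OF L] by simp
    show "int (card (U (fst w))) * int (card (U (snd w))) = int (card L) ^ (2 * k) - int (card L) ^ k * (if fst w = 0 then 1 else 0)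
                     - int (card L) ^ k * (if snd w = 0 then 1 else 0)"
      using cU[OF wl(1)] cU[OF wl(2)] wl(3) pos by (cases w) (auto simp: of_nat_diff power_mult_distrib power_mult power2_eq_square algebra_simps)
  qed simp
  also have "\<dots> = int (card W) * int (card L) ^ (2 * k) - int (card L) ^ k * int (card {w\<in>W. fst w = 0})
                 - int (card L) ^ k * int (card {w\<in>W. snd w = 0})"
    by (simp add: sum_subtractf sum_distrib_left[symmetric] sum.inter_filter[symmetric])
  also have "\<dots> = int (card W) * int (card L) ^ (2 * k) - 2 * (int (card L) - 1) * int (card L) ^ k"
    using W sf_card_ge2[OF L] unfolding Wok_def by (simp add: card_cartesian_product card_L0 of_nat_diff)
  finally show ?thesis .
qed

lemma count_eq:
  assumes "Wok W" "k \<le> l"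
  shows "(\<Sum>d\<le>k. int (cnt W d) * ((int (card L) - 1) * int (card L) ^ (k - d)))
      = int (card W) * int (card L) ^ (2 * k) - 2 * (int (card L) - 1) * int (card L) ^ k"
proof -
  have "int (card (Bk W k)) = int (\<Sum>d\<le>k. cnt W d * ((card L - 1) * card L ^ (k - d)))"
    using Bk_sum[OF assms(2)] regroup[OF assms] by simp
  also have "\<dots> = (\<Sum>d\<le>k. int (cnt W d) * ((int (card L) - 1) * int (card L) ^ (k - d)))"
    using sf_card_ge2[OF L] by (simp add: of_nat_diff)
  finally show ?thesis using Bk_direct[OF assms(1)] by simp
qed

end



context wsetup begin

lemma Wok_Wall: "Wok Wall"
  unfolding Wok_def Wall_def using sf_mult[OF L] sf_0[OF L] by auto

lemma Wok_WF: "Wok WF"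
  unfolding Wok_def
proof (intro conjI ballI impI allI)
  show "WF \<subseteq> Wall" unfolding WF_def Wall_def by auto
next
  fix c x y assume c: "c \<in> L" "c \<noteq> 0" and xy: "(x, y) \<in> WF"
  then show "(c * x, c * y) \<in> WF" unfolding WF_def using sf_mult[OF L] by auto
next
  show "{w \<in> WF. fst w = 0} = {0} \<times> (L - {0})" unfolding WF_def using sf_0[OF L] by auto
  show "{w \<in> WF. snd w = 0} = (L - {0}) \<times> {0}" unfolding WF_def using sf_0[OF L] by auto
qed

lemma card_Wall: "card Wall = (card L + 1) * (card L - 1)"
proof -
  have "Wall = L \<times> L - {(0, 0)}" unfolding Wall_def by auto
  then have "card Wall = card L * card L - 1" using sf_0[OF L] by (simp add: card_cartesian_product)
  then show ?thesis by (simp add: algebra_simps diff_mult_distrib2)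
qed

lemma card_WF: "card WF = (q + 1) * (card L - 1)"
proof -
  define A :: "('a \<times> 'a) set" where "A = {0} \<times> (L - {0})"
  define B :: "('a \<times> 'a) set" where "B = (L - {0}) \<times> {0}"
  define C :: "('a \<times> 'a) set" where "C = (\<lambda>(c, y). (c * y, y)) ` ((F - {0}) \<times> (L - {0}))"
  have eq: "WF = A \<union> B \<union> C"
  proof
    show "WF \<subseteq> A \<union> B \<union> C"
    proof
      fix w assume w: "w \<in> WF"
      obtain x y where xy: "w = (x, y)" by (cases w)
      show "w \<in> A \<union> B \<union> C"
      proof (cases "x = 0 \<or> y = 0")
        case True then show ?thesis using w xy unfolding WF_def A_def B_def by auto
      next
        case False
        then have "x / y \<in> F" "x / y \<noteq> 0" "y \<in> L" using w xy unfolding WF_def by auto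
        moreover have "w = (\<lambda>(c, y). (c * y, y)) (x / y, y)" using xy False by simp
        ultimately show ?thesis unfolding C_def using False by blast
      qed
    qed
  next
    show "A \<union> B \<union> C \<subseteq> WF"
      unfolding A_def B_def C_def WF_def using FL sf_mult[OF L] sf_0[OF L] by auto
  qed
  have inj: "inj_on (\<lambda>(c, y). (c * y, y)) ((F - {0}) \<times> (L - {0}))"
    by (rule inj_onI) auto
  have cC: "card C = (q - 1) * (card L - 1)" unfolding C_def card_image[OF inj]
    using cF sf_0[OF F] sf_0[OF L] by (simp add: card_cartesian_product)
  have cA: "card A = card L - 1" unfolding A_def using sf_0[OF L] by (simp add: card_cartesian_product)
  have cB: "card B = card L - 1" unfolding B_def using sf_0[OF L] by (simp add: card_cartesian_product)
  have "card (A \<union> B \<union> C) = card A + card B + card C"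
  proof -
    have "card (A \<union> B \<union> C) = card (A \<union> B) + card C"
      by (rule card_Un_disjoint) (auto simp: A_def B_def C_def)
    moreover have "card (A \<union> B) = card A + card B"
      by (rule card_Un_disjoint) (auto simp: A_def B_def)
    ultimately show ?thesis by simp
  qed
  then have "card WF = 2 * (card L - 1) + (q - 1) * (card L - 1)" using eq cA cB cC by simp
  also have "\<dots> = (2 + (q - 1)) * (card L - 1)" by (simp only: add_mult_distrib)
  also have "\<dots> = (q + 1) * (card L - 1)" using q2 by simp
  finally show ?thesis .
qed

lemma cnt_formula:
  assumes W: "Wok W" and cW: "card W = w * (card L - 1)"
  shows "int (cnt W 0) = int w - 2"
    "\<And>k. 1 \<le> k \<Longrightarrow> k \<le> l \<Longrightarrow> int (cnt W k) = int w * int (card L) ^ (2 * k - 1) * (int (card L) - 1)"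
proof -
  have Q: "int (card L) \<ge> 2" using sf_card_ge2[OF L] by simp
  have rec: "(\<Sum>d\<le>k. int (cnt W d) * ((int (card L) - 1) * int (card L) ^ (k - d))) =
      int w * (int (card L) - 1) * int (card L) ^ (2 * k) - 2 * (int (card L) - 1) * int (card L) ^ k" if "k \<le> l" for k
    using count_eq[OF W that] cW sf_card_ge2[OF L] by (simp add: of_nat_diff)
  show "int (cnt W 0) = int w - 2" using solve_rec(1)[OF Q rec] by simp
  show "\<And>k. 1 \<le> k \<Longrightarrow> k \<le> l \<Longrightarrow> int (cnt W k) = int w * int (card L) ^ (2 * k - 1) * (int (card L) - 1)"
    using solve_rec(2)[OF Q rec] by simp
qed

lemma cntF0: "cnt WF 0 = q - 1"
  using cnt_formula(1)[OF Wok_WF card_WF] q2 by simp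
lemma cntA0: "cnt Wall 0 = card L - 1"
  using cnt_formula(1)[OF Wok_Wall card_Wall] by simp
lemma cntF: assumes "1 \<le> k" "k \<le> l" shows "cnt WF k = (q + 1) * card L ^ (2 * k - 1) * (card L - 1)"
proof -
  have h: "int (cnt WF k) = int (q + 1) * int (card L) ^ (2 * k - 1) * (int (card L) - 1)"
    using cnt_formula(2)[OF Wok_WF card_WF, OF assms] by simp
  have "int ((q + 1) * card L ^ (2 * k - 1) * (card L - 1)) = int (q + 1) * int (card L) ^ (2 * k - 1) * (int (card L) - 1)"
    using sf_card_ge2[OF L] by (simp add: of_nat_diff distrib_right)
  then have "int (cnt WF k) = int ((q + 1) * card L ^ (2 * k - 1) * (card L - 1))" using h by simp
  then show ?thesis by (simp only: of_nat_eq_iff)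
qed

lemma cntA: assumes "1 \<le> k" "k \<le> l" shows "cnt Wall k = (card L + 1) * card L ^ (2 * k - 1) * (card L - 1)"
proof -
  have h: "int (cnt Wall k) = int (card L + 1) * int (card L) ^ (2 * k - 1) * (int (card L) - 1)"
    using cnt_formula(2)[OF Wok_Wall card_Wall, OF assms] by simp
  have "int ((card L + 1) * card L ^ (2 * k - 1) * (card L - 1)) = int (card L + 1) * int (card L) ^ (2 * k - 1) * (int (card L) - 1)"
    using sf_card_ge2[OF L] by (simp add: of_nat_diff distrib_right)
  then have "int (cnt Wall k) = int ((card L + 1) * card L ^ (2 * k - 1) * (card L - 1))" using h by simp
  then show ?thesis by (simp only: of_nat_eq_iff)
qed

end



lemma image_mult_image: "(\<lambda>x. c * x) ` ((\<lambda>x. d * x) ` A) = (\<lambda>x. (c * d) * x) ` (A :: 'a::field set)"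
  by (simp add: image_image mult.assoc)

context wsetup begin

lemma stab_F: assumes "\<gamma> \<in> F" "\<gamma> \<noteq> 0" shows "(\<lambda>x. \<gamma> * x) ` SS = SS"
proof
  show "(\<lambda>x. \<gamma> * x) ` SS \<subseteq> SS" using SS_subsp assms(1) unfolding subsp_def by auto
  show "SS \<subseteq> (\<lambda>x. \<gamma> * x) ` SS"
  proof
    fix x assume x: "x \<in> SS"
    have "inverse \<gamma> * x \<in> SS" using SS_subsp x sf_inverse[OF F assms(1)] unfolding subsp_def by auto
    moreover have "x = \<gamma> * (inverse \<gamma> * x)" using assms(2) by (simp add: mult.assoc[symmetric])
    ultimately show "x \<in> (\<lambda>x. \<gamma> * x) ` SS" by blast
  qed
qed

lemma stab_imp_F: assumes g0: "\<gamma> \<noteq> 0" and st: "(\<lambda>x. \<gamma> * x) ` SS = SS" shows "\<gamma> \<in> F"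
proof -
  have "card (SS \<inter> (\<lambda>x. \<gamma> * x) ` SS) = q ^ (2 * l + 1)" using st card_SS by simp
  then have "q ^ mexp \<gamma> = q ^ (2 * l + 1)" using card_inter[OF g0] by simp
  then have me: "mexp \<gamma> = 2 * l + 1" using q2 by (metis One_nat_def Suc_1 Suc_le_lessD power_inject_exp)
  then have sl: "sol l \<gamma> \<noteq> {}" unfolding mexp_def by (auto split: if_splits)
  then have "2 * (l - D \<gamma>) + (if eps \<gamma> then 1 else 0) = 2 * l + 1" using me unfolding mexp_def by simp
  then have d0: "D \<gamma> = 0" and ep: "eps \<gamma>" using Dl[OF g0 sl] by (auto split: if_splits)
  note m = mfg[OF g0 sl]
  have "degree (mf \<gamma>) = 0" "degree (mg \<gamma>) = 0" using m(5,6) d0 by auto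
  then have pf: "poly (mf \<gamma>) lam = coeff (mf \<gamma>) 0" and pg: "poly (mg \<gamma>) lam = coeff (mg \<gamma>) 0"
    by (metis degree_0_id poly_pCons poly_0 mult_zero_right add.right_neutral)+
  have a0: "coeff (mf \<gamma>) 0 \<noteq> 0" using m(3) \<open>degree (mf \<gamma>) = 0\<close> by (metis leading_coeff_0_iff)
  have b0: "coeff (mg \<gamma>) 0 \<noteq> 0" using m(4) \<open>degree (mg \<gamma>) = 0\<close> by (metis leading_coeff_0_iff)
  have "coeff (mf \<gamma>) 0 / coeff (mg \<gamma>) 0 \<in> F" using ep a0 b0 d0 unfolding eps_def top_def WF_def by auto
  moreover have "coeff (mf \<gamma>) 0 = \<gamma> * coeff (mg \<gamma>) 0" using m(7) pf pg by simp
  ultimately show ?thesis using b0 by simp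
qed

lemma orbit_fiber:
  assumes a0: "\<alpha> \<noteq> 0"
  shows "card {\<beta>. \<beta> \<noteq> 0 \<and> (\<lambda>x. \<beta> * x) ` SS = (\<lambda>x. \<alpha> * x) ` SS} = q - 1"
proof -
  have "{\<beta>. \<beta> \<noteq> 0 \<and> (\<lambda>x. \<beta> * x) ` SS = (\<lambda>x. \<alpha> * x) ` SS} = (\<lambda>c. c * \<alpha>) ` (F - {0})"
  proof
    show "{\<beta>. \<beta> \<noteq> 0 \<and> (\<lambda>x. \<beta> * x) ` SS = (\<lambda>x. \<alpha> * x) ` SS} \<subseteq> (\<lambda>c. c * \<alpha>) ` (F - {0})"
    proof clarify
      fix \<beta> assume b: "\<beta> \<noteq> 0" "(\<lambda>x. \<beta> * x) ` SS = (\<lambda>x. \<alpha> * x) ` SS"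
      have "(\<lambda>x. (inverse \<alpha> * \<beta>) * x) ` SS = (\<lambda>x. (inverse \<alpha> * \<alpha>) * x) ` SS"
        using arg_cong[OF b(2), of "image (\<lambda>x. inverse \<alpha> * x)"] by (simp add: image_mult_image)
      then have "(\<lambda>x. (inverse \<alpha> * \<beta>) * x) ` SS = SS" using a0 by simp
      then have "inverse \<alpha> * \<beta> \<in> F" using stab_imp_F a0 b(1) by simp
      moreover have "\<beta> = (inverse \<alpha> * \<beta>) * \<alpha>" using a0 by simp
      moreover have "inverse \<alpha> * \<beta> \<noteq> 0" using a0 b(1) by simp
      ultimately show "\<beta> \<in> (\<lambda>c. c * \<alpha>) ` (F - {0})" by blast
    qed
  next
    show "(\<lambda>c. c * \<alpha>) ` (F - {0}) \<subseteq> {\<beta>. \<beta> \<noteq> 0 \<and> (\<lambda>x. \<beta> * x) ` SS = (\<lambda>x. \<alpha> * x) ` SS}"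
    proof clarify
      fix c assume c: "c \<in> F" "c \<noteq> 0"
      have "(\<lambda>x. (c * \<alpha>) * x) ` SS = (\<lambda>x. (\<alpha> * c) * x) ` SS" by (simp add: mult.commute)
      also have "\<dots> = (\<lambda>x. \<alpha> * x) ` ((\<lambda>x. c * x) ` SS)" by (simp add: image_mult_image)
      also have "\<dots> = (\<lambda>x. \<alpha> * x) ` SS" using stab_F[OF c] by simp
      finally show "c * \<alpha> \<noteq> 0 \<and> (\<lambda>x. (c * \<alpha>) * x) ` SS = (\<lambda>x. \<alpha> * x) ` SS" using c a0 by simp
    qed
  qed
  moreover have "inj_on (\<lambda>c. c * \<alpha>) (F - {0})" using a0 by (auto intro: inj_onI)
  ultimately show ?thesis using cF sf_0[OF F] by (simp add: card_image)
qed

lemma orbit_count: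
  "card {V \<in> orb SS. P V} * (q - 1) = card {\<alpha>. \<alpha> \<noteq> 0 \<and> P ((\<lambda>x. \<alpha> * x) ` SS)}"
proof -
  define A where "A = {\<alpha>. \<alpha> \<noteq> 0 \<and> P ((\<lambda>x. \<alpha> * x) ` SS)}"
  define B where "B = {V \<in> orb SS. P V}"
  have finB: "finite B" unfolding B_def by simp
  have "card A = (\<Sum>a\<in>A. 1)" by simp
  also have "\<dots> = (\<Sum>V\<in>B. \<Sum>a\<in>{x. x \<in> A \<and> (\<lambda>x'. x * x') ` SS = V}. 1)"
    by (rule sum.group[symmetric]) (auto simp: A_def B_def orb_def)
  also have "\<dots> = (\<Sum>V\<in>B. q - 1)"
  proof (rule sum.cong)
    fix V assume "V \<in> B"
    then obtain a where a: "a \<noteq> 0" "V = (\<lambda>x. a * x) ` SS" "P V" unfolding B_def orb_def by auto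
    have "{x. x \<in> A \<and> (\<lambda>x'. x * x') ` SS = V} = {\<beta>. \<beta> \<noteq> 0 \<and> (\<lambda>x. \<beta> * x) ` SS = (\<lambda>x. a * x) ` SS}"
      unfolding A_def using a by auto
    then show "(\<Sum>a\<in>{x. x \<in> A \<and> (\<lambda>x'. x * x') ` SS = V}. 1) = q - 1" using orbit_fiber[OF a(1)] by simp
  qed simp
  finally show ?thesis unfolding A_def B_def by simp
qed

lemma weight_count:
  assumes "i \<le> 2 * l + 1"
  shows "weight F SS i * (q - 1) = card {\<alpha>. \<alpha> \<noteq> 0 \<and> mexp \<alpha> = 2 * l + 1 - i}"
proof -
  have "weight F SS i * (q - 1) = card {\<alpha>. \<alpha> \<noteq> 0 \<and> subspace_dist F SS ((\<lambda>x. \<alpha> * x) ` SS) = 2 * i}"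
    unfolding weight_def by (rule orbit_count)
  also have "{\<alpha>. \<alpha> \<noteq> 0 \<and> subspace_dist F SS ((\<lambda>x. \<alpha> * x) ` SS) = 2 * i} = {\<alpha>. \<alpha> \<noteq> 0 \<and> mexp \<alpha> = 2 * l + 1 - i}"
  proof (rule Collect_cong)
    fix \<alpha> :: 'a
    show "(\<alpha> \<noteq> 0 \<and> subspace_dist F SS ((\<lambda>x. \<alpha> * x) ` SS) = 2 * i) = (\<alpha> \<noteq> 0 \<and> mexp \<alpha> = 2 * l + 1 - i)"
    proof (cases "\<alpha> = 0")
      case False
      have "mexp \<alpha> \<le> 2 * l + 1" by (rule mexp_le)
      then show ?thesis unfolding dist_eq[OF False] using assms False by presburger
    qed simp
  qed
  finally show ?thesis .
qed

end



lemma frac_aux: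
  fixes A B C D a u :: real
  assumes "a \<noteq> 0" "u \<noteq> 0" "A * u = B * u - C * a * u - D * a"
  shows "A / a = B / a - C - D / u"
proof -
  have "A / a = (A * u) / (a * u)" by (rule mult_divide_mult_cancel_right[symmetric, OF assms(2)])
  also have "\<dots> = (B * u - C * a * u - D * a) / (a * u)" by (simp only: assms(3))
  also have "\<dots> = B / a - C - D / u" using assms by (simp add: diff_divide_distrib)
  finally show ?thesis .
qed

lemma real_identity:
  fixes q x y :: real assumes q: "q > 1"
  shows "(y - q * q * x - (q + 1) * (q * q * x) * (q * q - 1)) / (q - 1) =
    (y - 1) / (q - 1) - (q + 1) - (q + 1) * q ^ 2 * ((q * x - q) * (q - 1) + (q + 1) * (q ^ 4 * x - 1)) / (q ^ 4 - 1)"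
proof (rule frac_aux)
  show "q - 1 \<noteq> 0" using q by simp
  have "q ^ 4 > 1 ^ 4" using q by (intro power_strict_mono) auto
  then show "q ^ 4 - 1 \<noteq> 0" by simp
  show "(y - q * q * x - (q + 1) * (q * q * x) * (q * q - 1)) * (q ^ 4 - 1) =
     (y - 1) * (q ^ 4 - 1) - (q + 1) * (q - 1) * (q ^ 4 - 1) - (q + 1) * q ^ 2 * ((q * x - q) * (q - 1) + (q + 1) * (q ^ 4 * x - 1)) * (q - 1)"
    by (simp add: algebra_simps power4_eq_xxxx power2_eq_square)
qed

context wsetup begin

lemma top_Wall': "\<alpha> \<noteq> 0 \<Longrightarrow> sol l \<alpha> \<noteq> {} \<Longrightarrow> top \<alpha> \<in> Wall" by (rule top_Wall)

lemma cntA_eq: "cnt Wall d = card {\<alpha>. \<alpha> \<noteq> 0 \<and> sol l \<alpha> \<noteq> {} \<and> D \<alpha> = d}"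
  unfolding cnt_def using top_Wall by metis

lemma cls_eps: "card {\<alpha>. \<alpha> \<noteq> 0 \<and> sol l \<alpha> \<noteq> {} \<and> D \<alpha> = d \<and> eps \<alpha>} = cnt WF d"
  unfolding cnt_def eps_def ..

lemma cls_neps: "card {\<alpha>. \<alpha> \<noteq> 0 \<and> sol l \<alpha> \<noteq> {} \<and> D \<alpha> = d \<and> \<not> eps \<alpha>} = cnt Wall d - cnt WF d"
proof -
  have "{\<alpha>. \<alpha> \<noteq> 0 \<and> sol l \<alpha> \<noteq> {} \<and> D \<alpha> = d \<and> \<not> eps \<alpha>} =
    {\<alpha>. \<alpha> \<noteq> 0 \<and> sol l \<alpha> \<noteq> {} \<and> D \<alpha> = d} - {\<alpha>. \<alpha> \<noteq> 0 \<and> sol l \<alpha> \<noteq> {} \<and> D \<alpha> = d \<and> eps \<alpha>}" by auto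
  moreover have "{\<alpha>. \<alpha> \<noteq> 0 \<and> sol l \<alpha> \<noteq> {} \<and> D \<alpha> = d \<and> eps \<alpha>} \<subseteq> {\<alpha>. \<alpha> \<noteq> 0 \<and> sol l \<alpha> \<noteq> {} \<and> D \<alpha> = d}" by auto
  ultimately show ?thesis using cls_eps cntA_eq by (simp add: card_Diff_subset)
qed

lemma N1: "card {\<alpha>. \<alpha> \<noteq> 0 \<and> mexp \<alpha> = 2 * l} = cnt Wall 0 - cnt WF 0"
proof -
  have "{\<alpha>. \<alpha> \<noteq> 0 \<and> mexp \<alpha> = 2 * l} = {\<alpha>. \<alpha> \<noteq> 0 \<and> sol l \<alpha> \<noteq> {} \<and> D \<alpha> = 0 \<and> \<not> eps \<alpha>}"
  proof (rule Collect_cong)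
    fix \<alpha> :: 'a
    show "(\<alpha> \<noteq> 0 \<and> mexp \<alpha> = 2 * l) = (\<alpha> \<noteq> 0 \<and> sol l \<alpha> \<noteq> {} \<and> D \<alpha> = 0 \<and> \<not> eps \<alpha>)"
    proof (cases "\<alpha> \<noteq> 0 \<and> sol l \<alpha> \<noteq> {}")
      case True
      then have "mexp \<alpha> = 2 * (l - D \<alpha>) + (if eps \<alpha> then 1 else 0)" "D \<alpha> \<le> l"
        using Dl[of \<alpha>] unfolding mexp_def by auto
      then have me: "mexp \<alpha> = 2 * (l - D \<alpha>) + (if eps \<alpha> then 1 else 0)" and dl: "D \<alpha> \<le> l" by auto
      have p1: "2 * (l - D \<alpha>) + 1 \<noteq> 2 * l" by presburger
      have p2: "2 * (l - D \<alpha>) = 2 * l \<longleftrightarrow> D \<alpha> = 0" using dl l1 by arith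
      show ?thesis using True me p1 p2 by auto
    next
      case False
      then show ?thesis using l1 unfolding mexp_def by auto
    qed
  qed
  then show ?thesis using cls_neps by simp
qed

lemma Neven: assumes "1 \<le> r" "r \<le> l" shows "card {\<alpha>. \<alpha> \<noteq> 0 \<and> mexp \<alpha> = 2 * l + 1 - 2 * r} = cnt WF r"
proof -
  have "{\<alpha>. \<alpha> \<noteq> 0 \<and> mexp \<alpha> = 2 * l + 1 - 2 * r} = {\<alpha>. \<alpha> \<noteq> 0 \<and> sol l \<alpha> \<noteq> {} \<and> D \<alpha> = r \<and> eps \<alpha>}"
  proof (rule Collect_cong)
    fix \<alpha> :: 'a
    show "(\<alpha> \<noteq> 0 \<and> mexp \<alpha> = 2 * l + 1 - 2 * r) = (\<alpha> \<noteq> 0 \<and> sol l \<alpha> \<noteq> {} \<and> D \<alpha> = r \<and> eps \<alpha>)"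
    proof (cases "\<alpha> \<noteq> 0 \<and> sol l \<alpha> \<noteq> {}")
      case True
      then have "mexp \<alpha> = 2 * (l - D \<alpha>) + (if eps \<alpha> then 1 else 0)" "D \<alpha> \<le> l"
        using Dl[of \<alpha>] unfolding mexp_def by auto
      then have me: "mexp \<alpha> = 2 * (l - D \<alpha>) + (if eps \<alpha> then 1 else 0)" and dl: "D \<alpha> \<le> l" by auto
      have p1: "2 * (l - D \<alpha>) \<noteq> 2 * l + 1 - 2 * r" using assms by presburger
      have p2: "2 * (l - D \<alpha>) + 1 = 2 * l + 1 - 2 * r \<longleftrightarrow> D \<alpha> = r" using dl assms by arith
      show ?thesis using True me p1 p2 by auto
    next
      case False
      then show ?thesis using assms unfolding mexp_def by auto
    qed
  qed
  then show ?thesis using cls_eps by simp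
qed

lemma Nodd: assumes "1 \<le> r" "r \<le> l - 1" shows "card {\<alpha>. \<alpha> \<noteq> 0 \<and> mexp \<alpha> = 2 * l + 1 - (2 * r + 1)} = cnt Wall r - cnt WF r"
proof -
  have "{\<alpha>. \<alpha> \<noteq> 0 \<and> mexp \<alpha> = 2 * l + 1 - (2 * r + 1)} = {\<alpha>. \<alpha> \<noteq> 0 \<and> sol l \<alpha> \<noteq> {} \<and> D \<alpha> = r \<and> \<not> eps \<alpha>}"
  proof (rule Collect_cong)
    fix \<alpha> :: 'a
    show "(\<alpha> \<noteq> 0 \<and> mexp \<alpha> = 2 * l + 1 - (2 * r + 1)) = (\<alpha> \<noteq> 0 \<and> sol l \<alpha> \<noteq> {} \<and> D \<alpha> = r \<and> \<not> eps \<alpha>)"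
    proof (cases "\<alpha> \<noteq> 0 \<and> sol l \<alpha> \<noteq> {}")
      case True
      then have "mexp \<alpha> = 2 * (l - D \<alpha>) + (if eps \<alpha> then 1 else 0)" "D \<alpha> \<le> l"
        using Dl[of \<alpha>] unfolding mexp_def by auto
      then have me: "mexp \<alpha> = 2 * (l - D \<alpha>) + (if eps \<alpha> then 1 else 0)" and dl: "D \<alpha> \<le> l" by auto
      have p1: "2 * (l - D \<alpha>) + 1 \<noteq> 2 * l + 1 - (2 * r + 1)" using assms by presburger
      have p2: "2 * (l - D \<alpha>) = 2 * l + 1 - (2 * r + 1) \<longleftrightarrow> D \<alpha> = r" using dl assms by arith
      show ?thesis using True me p1 p2 by auto
    next
      case False
      then show ?thesis using assms unfolding mexp_def by auto
    qed
  qed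
  then show ?thesis using cls_neps by simp
qed

lemma sum_cntA: "1 \<le> j \<Longrightarrow> j \<le> l \<Longrightarrow> (\<Sum>d<j. cnt Wall d) = card L ^ (2 * j - 1) - 1"
proof (induction j rule: nat_induct_at_least)
  case base
  then show ?case using cntA0 by simp
next
  case (Suc j)
  have "(\<Sum>d<Suc j. cnt Wall d) = card L ^ (2 * j - 1) - 1 + (card L + 1) * card L ^ (2 * j - 1) * (card L - 1)"
    using Suc cntA[of j] by simp
  also have "\<dots> = card L ^ (2 * Suc j - 1) - 1"
  proof -
    obtain Q where Q: "card L = Suc Q" using sf_card_ge2[OF L] by (cases "card L") auto
    obtain e where e1: "2 * j - 1 = e" by simp
    have e2: "2 * Suc j - 1 = Suc (Suc e)" using Suc(1) e1 by simp
    note e = e1 e2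
    obtain z where z: "Suc Q ^ e = Suc z" by (metis not0_implies_Suc power_not_zero nat.distinct(1))
    show ?thesis unfolding Q e by (simp add: z algebra_simps)
  qed
  finally show ?case .
qed

lemma Ntop:
  assumes cU: "card (UNIV :: 'a set) = N"
  shows "card {\<alpha>. \<alpha> \<noteq> 0 \<and> mexp \<alpha> = 0} = (N - 1) - ((card L ^ (2 * l - 1) - 1) + cnt WF l)
    \<and> (card L ^ (2 * l - 1) - 1) + cnt WF l \<le> N - 1"
proof -
  define A where "A = {\<alpha>. \<alpha> \<noteq> 0 \<and> sol l \<alpha> \<noteq> {} \<and> D \<alpha> < l}"
  define B where "B = {\<alpha>. \<alpha> \<noteq> 0 \<and> sol l \<alpha> \<noteq> {} \<and> D \<alpha> = l \<and> eps \<alpha>}"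
  have eq: "{\<alpha>. \<alpha> \<noteq> 0 \<and> mexp \<alpha> = 0} = (UNIV - {0}) - (A \<union> B)"
  proof -
    have "mexp \<alpha> = 0 \<longleftrightarrow> \<not> (sol l \<alpha> \<noteq> {} \<and> (D \<alpha> < l \<or> (D \<alpha> = l \<and> eps \<alpha>)))" if a: "\<alpha> \<noteq> 0" for \<alpha>
    proof (cases "sol l \<alpha> \<noteq> {}")
      case True
      then show ?thesis using Dl[OF a True] unfolding mexp_def by auto
    qed (simp add: mexp_def)
    then have "{\<alpha>. \<alpha> \<noteq> 0 \<and> mexp \<alpha> = 0} = {\<alpha>. \<alpha> \<noteq> 0 \<and> \<not> (sol l \<alpha> \<noteq> {} \<and> (D \<alpha> < l \<or> (D \<alpha> = l \<and> eps \<alpha>)))}"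
      by blast
    also have "\<dots> = (UNIV - {0}) - (A \<union> B)" unfolding A_def B_def by blast
    finally show ?thesis .
  qed
  have cA: "card A = card L ^ (2 * l - 1) - 1"
  proof -
    have "card A = (\<Sum>\<alpha>\<in>A. 1)" by simp
    also have "\<dots> = (\<Sum>d\<in>{..<l}. \<Sum>\<alpha>\<in>{x. x \<in> A \<and> D x = d}. 1)"
      by (rule sum.group[symmetric]) (auto simp: A_def)
    also have "\<dots> = (\<Sum>d<l. cnt Wall d)"
    proof (rule sum.cong)
      fix d assume "d \<in> {..<l}"
      then have "{x. x \<in> A \<and> D x = d} = {\<alpha>. \<alpha> \<noteq> 0 \<and> sol l \<alpha> \<noteq> {} \<and> D \<alpha> = d}" unfolding A_def by auto
      then show "(\<Sum>\<alpha>\<in>{x. x \<in> A \<and> D x = d}. 1) = cnt Wall d" using cntA_eq by simp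
    qed simp
    also have "\<dots> = card L ^ (2 * l - 1) - 1" using sum_cntA[OF l1 order_refl] .
    finally show ?thesis .
  qed
  have cB: "card B = cnt WF l" unfolding B_def using cls_eps by simp
  have cAB: "card (A \<union> B) = card A + card B" by (rule card_Un_disjoint) (auto simp: A_def B_def)
  then have "card (A \<union> B) = card A + card B" .
  moreover have "A \<union> B \<subseteq> UNIV - {0}" unfolding A_def B_def by auto
  ultimately have "card ((UNIV - {0}) - (A \<union> B)) = (N - 1) - (card A + card B)"
    using cU by (simp add: card_Diff_subset)
  moreover have "card (A \<union> B) \<le> card (UNIV - {0 :: 'a})" by (rule card_mono) (use \<open>A \<union> B \<subseteq> UNIV - {0}\<close> in auto)
  ultimately show ?thesis using eq cA cB cU cAB by simp
qed

end



lemma arith1: "(q::nat) \<ge> 2 \<Longrightarrow> (q ^ 2 - 1) - (q - 1) = q * (q - 1)"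
  by (cases q) (auto simp: power2_eq_square algebra_simps)

lemma sq1: "(q::nat) \<ge> 1 \<Longrightarrow> q ^ 2 - 1 = (q + 1) * (q - 1)"
  by (cases q) (auto simp: power2_eq_square algebra_simps)

lemma pw: "(1::nat) \<le> r \<Longrightarrow> (q ^ 2) ^ (2 * r - 1) = (q::nat) ^ (4 * r - 2)"
proof -
  assume r: "1 \<le> r"
  have "(q ^ 2) ^ (2 * r - 1) = q ^ (2 * (2 * r - 1))" by (simp only: power_mult)
  moreover have "2 * (2 * r - 1) = 4 * r - 2" by simp
  ultimately show ?thesis by simp
qed

lemma arith2': "(q::nat) \<ge> 1 \<Longrightarrow> (q + 1) * Z * (q ^ 2 - 1) = Z * (q + 1) ^ 2 * (q - 1)"
  by (cases q) (simp_all add: algebra_simps power2_eq_square)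

lemma arith2: assumes "(q::nat) \<ge> 2" "1 \<le> r"
  shows "(q + 1) * (q ^ 2) ^ (2 * r - 1) * (q ^ 2 - 1) = q ^ (4 * r - 2) * (q + 1) ^ 2 * (q - 1)"
  unfolding pw[OF assms(2)] by (rule arith2') (use assms in simp)

lemma arith3: assumes "(q::nat) \<ge> 2" "1 \<le> r"
  shows "(q ^ 2 + 1) * (q ^ 2) ^ (2 * r - 1) * (q ^ 2 - 1) - (q + 1) * (q ^ 2) ^ (2 * r - 1) * (q ^ 2 - 1)
     = q ^ (4 * r - 1) * (q ^ 2 - 1) * (q - 1)"
proof -
  have e2: "q ^ (4 * r - 1) = q * q ^ (4 * r - 2)"
  proof -
    have "4 * r - 1 = Suc (4 * r - 2)" using assms(2) by simp
    then show ?thesis by simp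
  qed
  have "(q ^ 2 + 1) * (q ^ 2) ^ (2 * r - 1) * (q ^ 2 - 1) - (q + 1) * (q ^ 2) ^ (2 * r - 1) * (q ^ 2 - 1)
      = ((q ^ 2 + 1) - (q + 1)) * ((q ^ 2) ^ (2 * r - 1) * (q ^ 2 - 1))"
    by (simp only: diff_mult_distrib mult.assoc)
  also have "(q ^ 2 + 1) - (q + 1) = q * (q - 1)" using assms(1) by (cases q) (auto simp: power2_eq_square)
  finally show ?thesis unfolding pw[OF assms(2)] e2 by (simp only: mult_ac)
qed

theorem theorem2p4:
  fixes q n l :: nat and K K2 :: "'a::{field,finite} set" and lam :: 'a
  assumes "\<exists>p k. prime p \<and> k > 0 \<and> q = p ^ k"
    and "n > 0" and "even n"
    and "card (UNIV :: 'a set) = q ^ n"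
    and "subfield_of K" and "card K = q"
    and "subfield_of K2" and "card K2 = q ^ 2" and "K \<subseteq> K2"
    and "lam \<notin> K2"
    and "1 \<le> l" and "2 * l < dim_over K2 (adjoin K2 lam)"
  defines "S \<equiv> {(\<Sum>j<l. c j * lam ^ j) + a * lam ^ l | c a. (\<forall>j<l. c j \<in> K2) \<and> a \<in> K}"
  shows "dim_over K S = 2 * l + 1
    \<and> weight K S 1 = q
    \<and> (\<forall>r\<in>{1..l-1}. weight K S (2 * r + 1) = q ^ (4 * r - 1) * (q ^ 2 - 1))
    \<and> (\<forall>r\<in>{1..l}. weight K S (2 * r) = q ^ (4 * r - 2) * (q + 1) ^ 2)
    \<and> real (weight K S (2 * l + 1)) =
        (real q ^ n - 1) / (real q - 1) - (real q + 1)
        - (real q + 1) * real q ^ 2 *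
          ((real q ^ (4 * l - 3) - real q) * (real q - 1) + (real q + 1) * (real q ^ (4 * l) - 1))
          / (real q ^ 4 - 1)"
proof -
  interpret W: wsetup K K2 lam q l
    by unfold_locales (use assms in auto)
  have SS: "S = W.SS"
  proof
    show "S \<subseteq> W.SS"
    proof
      fix x assume "x \<in> S"
      then obtain c a where ca: "x = (\<Sum>j<l. c j * lam ^ j) + a * lam ^ l" "\<forall>j<l. c j \<in> K2" "a \<in> K"
        unfolding S_def by blast
      define p where "p = (\<Sum>j<l. monom (c j) j) + monom a l"
      have cp: "coeff p i = (if i < l then c i else if i = l then a else 0)" for i
        unfolding p_def by (auto simp: coeff_sum coeff_monom)
      have "p \<in> W.PS" unfolding W.PS_def inP_def
        using ca assms(9) sf_0[OF assms(7)] by (auto simp: cp intro!: degree_le)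
      moreover have "poly p lam = x" unfolding p_def ca(1) by (simp add: poly_sum poly_monom)
      ultimately show "x \<in> W.SS" unfolding W.SS_def by blast
    qed
  next
    show "W.SS \<subseteq> S"
    proof
      fix x assume "x \<in> W.SS"
      then obtain p where p: "p \<in> W.PS" "x = poly p lam" unfolding W.SS_def by blast
      have "degree p < Suc l" using p(1) unfolding W.PS_def by auto
      then have "x = (\<Sum>j<Suc l. coeff p j * lam ^ j)" using p(2) poly_as_sum by blast
      then have "x = (\<Sum>j<l. coeff p j * lam ^ j) + coeff p l * lam ^ l" by simp
      moreover have "\<forall>j<l. coeff p j \<in> K2" "coeff p l \<in> K" using p(1) unfolding W.PS_def inP_def by auto
      ultimately show "x \<in> S" unfolding S_def by blast
    qed
  qed
  have q2: "q \<ge> 2" by (rule W.q2)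
  have q1: "q - 1 > 0" using q2 by simp
  have cancel: "a = b" if "a * (q - 1) = b * (q - 1)" for a b using that q1 by simp
  have w1: "weight K W.SS 1 = q"
  proof -
    have "weight K W.SS 1 * (q - 1) = W.cnt W.Wall 0 - W.cnt W.WF 0"
      using W.weight_count[of 1] W.N1 by simp
    also have "\<dots> = q * (q - 1)" using W.cntA0 W.cntF0 assms(8) arith1[OF q2] by simp
    finally show ?thesis using cancel by blast
  qed
  have wodd: "weight K W.SS (2 * r + 1) = q ^ (4 * r - 1) * (q ^ 2 - 1)" if r: "r \<in> {1..l-1}" for r
  proof -
    have r1: "1 \<le> r" "r \<le> l - 1" "r \<le> l" using r by auto
    have "weight K W.SS (2 * r + 1) * (q - 1) = W.cnt W.Wall r - W.cnt W.WF r"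
      using W.weight_count[of "2 * r + 1"] W.Nodd[OF r1(1,2)] r1 by simp
    also have "\<dots> = q ^ (4 * r - 1) * (q ^ 2 - 1) * (q - 1)"
      using W.cntA[OF r1(1,3)] W.cntF[OF r1(1,3)] assms(8) arith3[OF q2 r1(1)] by simp
    finally show ?thesis using cancel by blast
  qed
  have weven: "weight K W.SS (2 * r) = q ^ (4 * r - 2) * (q + 1) ^ 2" if r: "r \<in> {1..l}" for r
  proof -
    have r1: "1 \<le> r" "r \<le> l" using r by auto
    have "weight K W.SS (2 * r) * (q - 1) = W.cnt W.WF r"
      using W.weight_count[of "2 * r"] W.Neven[OF r1] r1 by simp
    also have "\<dots> = q ^ (4 * r - 2) * (q + 1) ^ 2 * (q - 1)"
      using W.cntF[OF r1] assms(8) arith2[OF q2 r1(1)] by simp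
    finally show ?thesis using cancel by blast
  qed
  have wlast: "real (weight K W.SS (2 * l + 1)) =
        (real q ^ n - 1) / (real q - 1) - (real q + 1)
        - (real q + 1) * real q ^ 2 *
          ((real q ^ (4 * l - 3) - real q) * (real q - 1) + (real q + 1) * (real q ^ (4 * l) - 1))
          / (real q ^ 4 - 1)"
  proof -
    define X where "X = (q ^ 2) ^ (2 * l - 1)"
    have nt: "card {\<alpha>. \<alpha> \<noteq> 0 \<and> W.mexp \<alpha> = 0} = (q ^ n - 1) - ((X - 1) + W.cnt W.WF l)"
      "(X - 1) + W.cnt W.WF l \<le> q ^ n - 1"
      using W.Ntop[OF assms(4)] assms(8) unfolding X_def by auto
    have cf: "W.cnt W.WF l = (q + 1) * X * (q ^ 2 - 1)" using W.cntF[OF assms(11) order_refl] assms(8) unfolding X_def by simp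
    have wq: "weight K W.SS (2 * l + 1) * (q - 1) = (q ^ n - 1) - ((X - 1) + W.cnt W.WF l)"
      using W.weight_count[of "2 * l + 1"] nt(1) by simp
    have X1: "X \<ge> 1" unfolding X_def using q2 by simp
    have qn1: "q ^ n \<ge> 1" using q2 by simp
    have q21: "q ^ 2 \<ge> 1" using q2 by simp
    have "real (weight K W.SS (2 * l + 1)) * (real q - 1) = real ((q ^ n - 1) - ((X - 1) + W.cnt W.WF l))"
      using arg_cong[OF wq, of real] q2 by (simp add: of_nat_diff)
    also have "\<dots> = real q ^ n - 1 - (real X - 1) - real (W.cnt W.WF l)"
      using nt(2) X1 qn1 by (simp add: of_nat_diff)
    also have "real (W.cnt W.WF l) = (real q + 1) * real X * (real q ^ 2 - 1)"
    proof -
      have "real (q ^ 2 - 1) = real q ^ 2 - 1" using q21 by (simp add: of_nat_diff)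
      then show ?thesis unfolding cf by (simp only: of_nat_mult of_nat_add of_nat_1)
    qed
    finally have wr: "real (weight K W.SS (2 * l + 1)) = (real q ^ n - 1 - (real X - 1) - (real q + 1) * real X * (real q ^ 2 - 1)) / (real q - 1)"
      using q2 by (simp add: field_simps)
    obtain m where m: "l = Suc m" using assms(11) by (cases l) auto
    define x where "x = real q ^ (4 * m)"
    have "X = q ^ (4 * m + 2)" unfolding X_def using pw[of l q] m assms(11) by simp
    then have "real X = real q ^ (4 * m) * real q ^ 2" by (simp only: of_nat_power of_nat_mult power_add)
    then have "real X = real q * real q * x" unfolding x_def by (simp add: power2_eq_square mult_ac)
    moreover have "real q ^ (4 * l - 3) = real q * x" unfolding x_def m by simp
    moreover have "real q ^ (4 * l) = real q ^ 4 * x" unfolding x_def m by (simp add: power_add[symmetric])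
    ultimately show ?thesis unfolding wr
      using real_identity[where q="real q" and x=x and y="real q ^ n"] q2 by (simp add: power2_eq_square)
  qed
  show ?thesis unfolding SS using W.dim_SS w1 wodd weven wlast by auto
qed


end
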